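(* Let $\omega$ be a weight function and let $L$ be a linear partial differential operator on $\mathbb{T}^{N+1}$ with coefficients in $\mathcal{E}_{\{\omega\}}(\mathbb{T}^{N+1})$. If $L$ is globally $\{\omega\}$-solvable, then for every $h>0$ and $k>0$ there exists $C>0$ such that $$\Big|\int_{\mathbb{T}^{N+1}}fv\Big|\le C\|f\|_{1/h}\|{}^tLv\|_{1/k}$$ for all $f\in(\ker{}^tL)^\circ\cap\mathcal{E}_{\{\omega\},h}(\mathbb{T}^{N+1})$ and all $v\in\mathcal{E}_{\{\omega\}}(\mathbb{T}^{N+1})$ such that ${}^tLv\in\mathcal{E}_{\{\omega\},k}(\mathbb{T}^{N+1})$.
   Context: $\mathbb{T}^n=(\mathbb{R}/2\pi\mathbb{Z})^n$. A weight function is an increasing continuous $\omega:[0,\infty)\to[0,\infty)$ such that: there is $K\ge0$ with $\omega(2t)\le K(\omega(t)+1)$; $\omega(t)=O(t)$; $\log t=o(\omega(t))$ as $t\to\infty$; $\varphi(t)=\omega(e^t)$ convex (one may assume $\omega=0$ on $[0,1]$). $\varphi^*(t)=\sup_{s\ge0}\{st-\varphi(s)\}$. For $\lambda>0$, $\|f\|_\lambda=\sup_{x\in\mathbb{T}^n}\sup_{\alpha\in\mathbb{Z}_+^n}|\partial^\alpha f(x)|\exp(-\lambda\varphi^*(|\alpha|/\lambda))$; for $h>0$, $\mathcal{E}_{\{\omega\},h}(\mathbb{T}^n)=\{f\in C^\infty(\mathbb{T}^n):\|f\|_{1/h}<\infty\}$; $\mathcal{E}_{\{\omega\}}(\mathbb{T}^n)=\bigcup_{h}\mathcal{E}_{\{\omega\},h}(\mathbb{T}^n)$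 with the inductive limit topology; $\mathcal{E}'_{\{\omega\}}$ is its strong dual. ${}^tL$ is the formal transpose of $L$, extended to $\mathcal{E}'_{\{\omega\}}(\mathbb{T}^{N+1})$ by $\langle{}^tL\mu,\phi\rangle=\langle\mu,L\phi\rangle$. $(\ker{}^tL)^\circ=\{f\in\mathcal{E}_{\{\omega\}}(\mathbb{T}^{N+1}):\langle\mu,f\rangle=0\ \forall\mu\in\mathcal{E}'_{\{\omega\}}(\mathbb{T}^{N+1})$ with ${}^tL\mu=0\}$. $L$ is globally $\{\omega\}$-solvable if $L\mathcal{E}_{\{\omega\}}(\mathbb{T}^{N+1})=(\ker{}^tL)^\circ$. *)

theory Defs
  imports "HOL-Analysis.Analysis" "HOL-Library.Landau_Symbols"
begin

text \<open>Functions on the torus T^n (n = CARD('n) = N+1) are represented as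
  2 pi-periodic complex-valued functions on real^'n.\<close>

definition periodic_torus :: "(real^'n::finite \<Rightarrow> complex) \<Rightarrow> bool" where
  "periodic_torus f \<longleftrightarrow> (\<forall>x i. f (x + (2*pi) *\<^sub>R axis i 1) = f x)"

definition pd :: "'n::finite \<Rightarrow> (real^'n \<Rightarrow> complex) \<Rightarrow> real^'n \<Rightarrow> complex" where
  "pd i f x = vector_derivative (\<lambda>t. f (x + t *\<^sub>R axis i 1)) (at 0)"

fun pdl :: "'n::finite list \<Rightarrow> (real^'n \<Rightarrow> complex) \<Rightarrow> real^'n \<Rightarrow> complex" where
  "pdl [] f = f"
| "pdl (i # xs) f = pd i (pdl xs f)"

definition smooth_fun :: "(real^'n::finite \<Rightarrow> complex) \<Rightarrow> bool" where
  "smooth_fun f \<longleftrightarrow> (\<forall>xs. continuous_on UNIV (pdl xs f) \<and>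
     (\<forall>i x. ((\<lambda>t. pdl xs f (x + t *\<^sub>R axis i 1)) has_vector_derivative pd i (pdl xs f) x) (at 0)))"

definition mlen :: "('n::finite \<Rightarrow> nat) \<Rightarrow> nat" where
  "mlen \<alpha> = (\<Sum>i\<in>UNIV. \<alpha> i)"

text \<open>partial^alpha: iterate the partial derivatives with multiplicities alpha
  (for smooth functions the order is irrelevant).\<close>
definition Dm :: "('n::finite \<Rightarrow> nat) \<Rightarrow> (real^'n \<Rightarrow> complex) \<Rightarrow> real^'n \<Rightarrow> complex" where
  "Dm \<alpha> f = pdl (SOME xs. \<forall>i. count_list xs i = \<alpha> i) f"

definition weight_function :: "(real \<Rightarrow> real) \<Rightarrow> bool" where
  "weight_function \<omega> \<longleftrightarrow>
     mono_on {0..} \<omega> \<and> continuous_on {0..} \<omega> \<and> (\<forall>t\<ge>0. \<omega> t \<ge> 0) \<and>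
     (\<exists>K\<ge>0. \<forall>t\<ge>0. \<omega> (2*t) \<le> K * (\<omega> t + 1)) \<and>
     \<omega> \<in> O[at_top](\<lambda>t. t) \<and>
     (\<lambda>t. ln t) \<in> o[at_top](\<omega>) \<and>
     convex_on UNIV (\<lambda>t. \<omega> (exp t))"

definition phistar :: "(real \<Rightarrow> real) \<Rightarrow> real \<Rightarrow> real" where
  "phistar \<omega> t = (SUP s\<in>{0..}. s * t - \<omega> (exp s))"

definition wnorm :: "(real \<Rightarrow> real) \<Rightarrow> real \<Rightarrow> (real^'n::finite \<Rightarrow> complex) \<Rightarrow> ereal" where
  "wnorm \<omega> lam f = (SUP x. SUP \<alpha>::'n\<Rightarrow>nat.
      ereal (cmod (Dm \<alpha> f x) * exp (- lam * phistar \<omega> (real (mlen \<alpha>) / lam))))"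

definition Eh :: "(real \<Rightarrow> real) \<Rightarrow> real \<Rightarrow> (real^'n::finite \<Rightarrow> complex) set" where
  "Eh \<omega> h = {f. smooth_fun f \<and> periodic_torus f \<and> wnorm \<omega> (1/h) f < \<infinity>}"

definition Eom :: "(real \<Rightarrow> real) \<Rightarrow> (real^'n::finite \<Rightarrow> complex) set" where
  "Eom \<omega> = (\<Union>h\<in>{0<..}. Eh \<omega> h)"

text \<open>Elements of the dual E'_{omega}: linear functionals on E_{omega} that are continuous
  for the inductive limit topology, i.e. bounded on each step E_{omega,h}.\<close>
definition dual :: "(real \<Rightarrow> real) \<Rightarrow> ((real^'n::finite \<Rightarrow> complex) \<Rightarrow> complex) set" where
  "dual \<omega> = {\<mu>. (\<forall>f\<in>Eom \<omega>. \<forall>g\<in>Eom \<omega>. \<mu> (\<lambda>x. f x + g x) = \<mu> f + \<mu> g) \<and>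
                 (\<forall>f\<in>Eom \<omega>. \<forall>c. \<mu> (\<lambda>x. c * f x) = c * \<mu> f) \<and>
                 (\<forall>h>0. \<exists>C. \<forall>f\<in>Eh \<omega> h. ereal (cmod (\<mu> f)) \<le> ereal C * wnorm \<omega> (1/h) f)}"

definition Lop :: "nat \<Rightarrow> (('n::finite \<Rightarrow> nat) \<Rightarrow> real^'n \<Rightarrow> complex) \<Rightarrow>
                   (real^'n \<Rightarrow> complex) \<Rightarrow> real^'n \<Rightarrow> complex" where
  "Lop m a u x = (\<Sum>\<alpha>\<in>{\<alpha>. mlen \<alpha> \<le> m}. a \<alpha> x * Dm \<alpha> u x)"

definition tLop :: "nat \<Rightarrow> (('n::finite \<Rightarrow> nat) \<Rightarrow> real^'n \<Rightarrow> complex) \<Rightarrow>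
                   (real^'n \<Rightarrow> complex) \<Rightarrow> real^'n \<Rightarrow> complex" where
  "tLop m a v x = (\<Sum>\<alpha>\<in>{\<alpha>. mlen \<alpha> \<le> m}. (-1) ^ mlen \<alpha> * Dm \<alpha> (\<lambda>y. a \<alpha> y * v y) x)"

text \<open>ker tL in E'_{omega}: tL mu = 0 means <mu, L phi> = 0 for all phi in E_{omega}.\<close>
definition ker_tL :: "(real \<Rightarrow> real) \<Rightarrow> nat \<Rightarrow> (('n::finite \<Rightarrow> nat) \<Rightarrow> real^'n \<Rightarrow> complex) \<Rightarrow>
                     ((real^'n \<Rightarrow> complex) \<Rightarrow> complex) set" where
  "ker_tL \<omega> m a = {\<mu>\<in>dual \<omega>. \<forall>\<phi>\<in>Eom \<omega>. \<mu> (Lop m a \<phi>) = 0}"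

definition polar_ker_tL :: "(real \<Rightarrow> real) \<Rightarrow> nat \<Rightarrow> (('n::finite \<Rightarrow> nat) \<Rightarrow> real^'n \<Rightarrow> complex) \<Rightarrow>
                     (real^'n \<Rightarrow> complex) set" where
  "polar_ker_tL \<omega> m a = {f\<in>Eom \<omega>. \<forall>\<mu>\<in>ker_tL \<omega> m a. \<mu> f = 0}"

definition globally_solvable :: "(real \<Rightarrow> real) \<Rightarrow> nat \<Rightarrow> (('n::finite \<Rightarrow> nat) \<Rightarrow> real^'n \<Rightarrow> complex) \<Rightarrow> bool" where
  "globally_solvable \<omega> m a \<longleftrightarrow> Lop m a ` Eom \<omega> = polar_ker_tL \<omega> m a"

definition torus_integral :: "(real^'n::finite \<Rightarrow> complex) \<Rightarrow> complex" where
  "torus_integral f = integral (cbox 0 (\<chi> i. 2*pi)) f"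

end

theory Submission
  imports Defs
begin


definition dif :: "(real^'n::finite \<Rightarrow> complex) \<Rightarrow> bool" where
  "dif f \<longleftrightarrow> (\<forall>i x. ((\<lambda>t. f (x + t *\<^sub>R axis i 1)) has_vector_derivative pd i f x) (at 0))"

lemma pdl_append: "pdl (xs @ ys) f = pdl xs (pdl ys f)"
  by (induction xs) auto

lemma smooth_iff: "smooth_fun f \<longleftrightarrow> (\<forall>xs. continuous_on UNIV (pdl xs f) \<and> dif (pdl xs f))"
  unfolding smooth_fun_def dif_def by auto

lemma smooth_pdl: "smooth_fun f \<Longrightarrow> smooth_fun (pdl ys f)"
  unfolding smooth_iff by (metis pdl_append)

lemma smooth_cont: "smooth_fun f \<Longrightarrow> continuous_on UNIV f"
  unfolding smooth_iff by (metis pdl.simps(1))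

lemma smooth_dif: "smooth_fun f \<Longrightarrow> dif f"
  unfolding smooth_iff by (metis pdl.simps(1))

lemma smooth_pd: "smooth_fun f \<Longrightarrow> smooth_fun (pd i f)"
  using smooth_pdl[of f "[i]"] by simp

lemma dif_hvd_at: 
  assumes "dif f"
  shows "((\<lambda>t. f (x + t *\<^sub>R axis i 1)) has_vector_derivative pd i f (x + s *\<^sub>R axis i 1)) (at s)"
proof -
  have 1: "((\<lambda>t. f ((x + s *\<^sub>R axis i 1) + t *\<^sub>R axis i 1)) has_vector_derivative pd i f (x + s *\<^sub>R axis i 1)) (at 0)"
    using assms unfolding dif_def by blast
  have 2: "((\<lambda>t. t - s) has_vector_derivative 1) (at s)"
    by (auto intro!: derivative_eq_intros)
  have "((\<lambda>t. f ((x + s *\<^sub>R axis i 1) + t *\<^sub>R axis i 1)) \<circ> (\<lambda>t. t - s) has_vector_derivative 1 *\<^sub>R pd i f (x + s *\<^sub>R axis i 1)) (at s)"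
    by (rule vector_diff_chain_at[OF 2]) (simp add: 1)
  moreover have "((\<lambda>t. f ((x + s *\<^sub>R axis i 1) + t *\<^sub>R axis i 1)) \<circ> (\<lambda>t. t - s)) = (\<lambda>t. f (x + t *\<^sub>R axis i 1))"
    by (auto simp: o_def algebra_simps)
  ultimately show ?thesis by simp
qed

lemma pd_add:
  assumes "dif f" "dif g"
  shows "pd i (\<lambda>y. f y + g y) = (\<lambda>y. pd i f y + pd i g y)"
proof
  fix x
  have "((\<lambda>t. f (x + t *\<^sub>R axis i 1) + g (x + t *\<^sub>R axis i 1)) has_vector_derivative pd i f x + pd i g x) (at 0)"
    using assms unfolding dif_def by (intro has_vector_derivative_add) auto
  then show "pd i (\<lambda>y. f y + g y) x = pd i f x + pd i g x"
    unfolding pd_def by (rule vector_derivative_at)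
qed

lemma pd_cmul:
  assumes "dif f"
  shows "pd i (\<lambda>y. c * f y) = (\<lambda>y. c * pd i f y)"
proof
  fix x
  have "((\<lambda>t. c * f (x + t *\<^sub>R axis i 1)) has_vector_derivative c * pd i f x) (at 0)"
    using assms unfolding dif_def by (intro has_vector_derivative_mult_right) auto
  then show "pd i (\<lambda>y. c * f y) x = c * pd i f x"
    unfolding pd_def by (rule vector_derivative_at)
qed

lemma pd_mult:
  assumes "dif f" "dif g"
  shows "pd i (\<lambda>y. f y * g y) = (\<lambda>y. pd i f y * g y + f y * pd i g y)"
proof
  fix x
  have "((\<lambda>t. f (x + t *\<^sub>R axis i 1) * g (x + t *\<^sub>R axis i 1)) has_vector_derivative 
          f (x + 0 *\<^sub>R axis i 1) * pd i g x + pd i f x * g (x + 0 *\<^sub>R axis i 1)) (at 0)"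
    using assms unfolding dif_def by (intro has_vector_derivative_mult) auto
  then show "pd i (\<lambda>y. f y * g y) x = pd i f x * g x + f x * pd i g x"
    unfolding pd_def by (subst vector_derivative_at) (auto simp: algebra_simps)
qed

lemma dif_add: "dif f \<Longrightarrow> dif g \<Longrightarrow> dif (\<lambda>y. f y + g y)"
  unfolding dif_def
  by (simp add: pd_add[unfolded dif_def] has_vector_derivative_add)

lemma dif_cmul: "dif f \<Longrightarrow> dif (\<lambda>y. c * f y)"
  unfolding dif_def
  by (simp add: pd_cmul[unfolded dif_def] has_vector_derivative_mult_right)

lemma dif_mult: "dif f \<Longrightarrow> dif g \<Longrightarrow> dif (\<lambda>y. f y * g y)"
proof -
  assume a: "dif f" "dif g"
  show ?thesis
    unfolding dif_def pd_mult[OF a]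
  proof (intro allI)
    fix i x
    have "((\<lambda>t. f (x + t *\<^sub>R axis i 1) * g (x + t *\<^sub>R axis i 1)) has_vector_derivative 
          f (x + 0 *\<^sub>R axis i 1) * pd i g x + pd i f x * g (x + 0 *\<^sub>R axis i 1)) (at 0)"
      using a unfolding dif_def by (intro has_vector_derivative_mult) auto
    then show "((\<lambda>t. f (x + t *\<^sub>R axis i 1) * g (x + t *\<^sub>R axis i 1)) has_vector_derivative 
          pd i f x * g x + f x * pd i g x) (at 0)"
      by (simp add: algebra_simps)
  qed
qed

lemma pdl_add: "smooth_fun f \<Longrightarrow> smooth_fun g \<Longrightarrow> pdl xs (\<lambda>y. f y + g y) = (\<lambda>y. pdl xs f y + pdl xs g y)"
proof (induction xs)
  case Nil then show ?case by simp
next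
  case (Cons i xs)
  then show ?case using pd_add[OF smooth_dif[OF smooth_pdl[of f xs]] smooth_dif[OF smooth_pdl[of g xs]], of i] by simp
qed

lemma smooth_add: "smooth_fun f \<Longrightarrow> smooth_fun g \<Longrightarrow> smooth_fun (\<lambda>y. f y + g y)"
  unfolding smooth_iff[of "\<lambda>y. f y + g y"]
  by (simp add: pdl_add smooth_iff continuous_on_add dif_add)

lemma pdl_cmul: "smooth_fun f \<Longrightarrow> pdl xs (\<lambda>y. c * f y) = (\<lambda>y. c * pdl xs f y)"
proof (induction xs)
  case Nil then show ?case by simp
next
  case (Cons i xs)
  then show ?case using pd_cmul[OF smooth_dif[OF smooth_pdl[of f xs]], of i c] by simp
qed

lemma smooth_cmul: "smooth_fun f \<Longrightarrow> smooth_fun (\<lambda>y. c * f y)"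
  unfolding smooth_iff[of "\<lambda>y. c * f y"]
  by (simp add: pdl_cmul smooth_iff continuous_on_mult dif_cmul)

lemma pdl_add_weak:
  "(\<And>ys. length ys < length xs \<Longrightarrow> dif (pdl ys A) \<and> dif (pdl ys B)) \<Longrightarrow>
   pdl xs (\<lambda>y. A y + B y) = (\<lambda>y. pdl xs A y + pdl xs B y)"
proof (induction xs)
  case Nil then show ?case by simp
next
  case (Cons i xs)
  have "pdl xs (\<lambda>y. A y + B y) = (\<lambda>y. pdl xs A y + pdl xs B y)"
    using Cons by simp
  moreover have "dif (pdl xs A)" "dif (pdl xs B)" using Cons.prems[of xs] by auto
  ultimately show ?case using pd_add by simp
qed

lemma smooth_mult_aux:
  "\<forall>xs f (g::real^'n::finite\<Rightarrow>complex). length xs \<le> n \<longrightarrow> smooth_fun f \<longrightarrow> smooth_fun g \<longrightarrow>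
     continuous_on UNIV (pdl xs (\<lambda>y. f y * g y)) \<and> dif (pdl xs (\<lambda>y. f y * g y))"
proof (induction n)
  case 0
  then show ?case using smooth_cont smooth_dif by (auto intro!: continuous_on_mult dif_mult)
next
  case (Suc n)
  show ?case
  proof (intro allI impI)
    fix xs :: "'n list" and f g :: "real^'n \<Rightarrow> complex"
    assume l: "length xs \<le> Suc n" and f: "smooth_fun f" and g: "smooth_fun g"
    show "continuous_on UNIV (pdl xs (\<lambda>y. f y * g y)) \<and> dif (pdl xs (\<lambda>y. f y * g y))"
    proof (cases xs rule: rev_cases)
      case Nil
      then show ?thesis using f g smooth_cont smooth_dif by (auto intro!: continuous_on_mult dif_mult)
    next
      case (snoc ys i)
      define A where "A = (\<lambda>y. pd i f y * g y)"
      define B where "B = (\<lambda>y. f y * pd i g y)"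
      have ly: "length ys \<le> n" using l snoc by simp
      have IHA: "continuous_on UNIV (pdl zs A) \<and> dif (pdl zs A)" if "length zs \<le> n" for zs
        using Suc.IH that f g smooth_pd unfolding A_def by blast
      have IHB: "continuous_on UNIV (pdl zs B) \<and> dif (pdl zs B)" if "length zs \<le> n" for zs
        using Suc.IH that f g smooth_pd unfolding B_def by blast
      have "pdl xs (\<lambda>y. f y * g y) = pdl ys (\<lambda>y. A y + B y)"
        using snoc pdl_append[of ys "[i]"] pd_mult[OF smooth_dif[OF f] smooth_dif[OF g]]
        unfolding A_def B_def by simp
      also have "\<dots> = (\<lambda>y. pdl ys A y + pdl ys B y)"
        by (rule pdl_add_weak) (use IHA IHB ly in auto)
      finally show ?thesis
        using IHA[OF ly] IHB[OF ly] by (simp add: continuous_on_add dif_add)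
    qed
  qed
qed

lemma smooth_mult: 
  assumes "smooth_fun f" "smooth_fun g" shows "smooth_fun (\<lambda>y. f y * g y)"
  unfolding smooth_iff using smooth_mult_aux assms by blast

lemma smooth_const: "smooth_fun (\<lambda>y. c)"
proof -
  have pd0: "pd i (\<lambda>y. c) = (\<lambda>y. 0)" for i c
    unfolding pd_def by (rule ext, rule vector_derivative_at) (auto intro!: derivative_eq_intros)
  have "pdl xs (\<lambda>y. c) = (\<lambda>y. if xs = [] then c else 0)" for xs
    by (induction xs) (auto simp: pd0)
  moreover have "dif (\<lambda>y. c)" for c :: complex
    unfolding dif_def pd0 by (auto intro!: derivative_eq_intros)
  ultimately show ?thesis unfolding smooth_iff
  proof (intro allI)
    fix xs show "continuous_on UNIV (pdl xs (\<lambda>y. c)) \<and> dif (pdl xs (\<lambda>y. c))"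
      by (cases "xs = []") (auto simp: \<open>\<And>xs. pdl xs (\<lambda>y. c) = _\<close> \<open>\<And>c. dif (\<lambda>y. c)\<close>)
  qed
qed



lemma mvt_lin:
  fixes \<psi> \<psi>' :: "real \<Rightarrow> complex"
  assumes d: "\<And>\<tau>. \<tau> \<in> closed_segment 0 t \<Longrightarrow> (\<psi> has_vector_derivative \<psi>' \<tau>) (at \<tau>)"
      and b: "\<And>\<tau>. \<tau> \<in> closed_segment 0 t \<Longrightarrow> norm (\<psi>' \<tau> - c) \<le> e"
  shows "norm (\<psi> t - \<psi> 0 - t *\<^sub>R c) \<le> 3 * \<bar>t\<bar> * e"
proof -
  have 0: "0 \<in> closed_segment 0 t" by simp
  have B: "norm (\<psi>' \<tau> - \<psi>' 0) \<le> 2 * e" if "\<tau> \<in> closed_segment 0 t" for \<tau>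
  proof -
    have "norm (\<psi>' \<tau> - \<psi>' 0) = norm ((\<psi>' \<tau> - c) - (\<psi>' 0 - c))" by simp
    also have "\<dots> \<le> norm (\<psi>' \<tau> - c) + norm (\<psi>' 0 - c)" by (rule norm_triangle_ineq4)
    finally show ?thesis using b[OF that] b[OF 0] by simp
  qed
  have 1: "norm (\<psi> t - \<psi> 0 - (t - 0) *\<^sub>R \<psi>' 0) \<le> norm (t - 0) * (2 * e)"
    by (rule vector_differentiable_bound_linearization[where S="closed_segment 0 t"])
       (auto intro: has_vector_derivative_at_within d B)
  have 2: "norm (t *\<^sub>R \<psi>' 0 - t *\<^sub>R c) \<le> \<bar>t\<bar> * e"
  proof -
    have "norm (t *\<^sub>R \<psi>' 0 - t *\<^sub>R c) = \<bar>t\<bar> * norm (\<psi>' 0 - c)"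
      by (metis norm_scaleR scaleR_diff_right)
    also have "\<dots> \<le> \<bar>t\<bar> * e" using b[OF 0] by (simp add: mult_left_mono)
    finally show ?thesis .
  qed
  have "norm (\<psi> t - \<psi> 0 - t *\<^sub>R c) = norm ((\<psi> t - \<psi> 0 - t *\<^sub>R \<psi>' 0) + (t *\<^sub>R \<psi>' 0 - t *\<^sub>R c))"
    by (simp add: algebra_simps)
  also have "\<dots> \<le> norm (\<psi> t - \<psi> 0 - t *\<^sub>R \<psi>' 0) + norm (t *\<^sub>R \<psi>' 0 - t *\<^sub>R c)"
    by (rule norm_triangle_ineq)
  finally show ?thesis using 1 2 by simp
qed

lemma aux4: "(a::complex) - b - (c - d) - e = a - b - c + d - e" by simp

lemma aux5: "(a::complex) - b - c + d = a - c - b + d" by simp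

lemma mixed:
  fixes g :: "real^'n::finite \<Rightarrow> complex"
  assumes g: "smooth_fun g" and s: "s > 0"
    and cK: "\<And>y. norm (y - x) \<le> 2 * s \<Longrightarrow> norm (pd j (pd i g) y - pd j (pd i g) x) \<le> \<epsilon>"
  shows "norm ((g (x + s *\<^sub>R axis i 1 + s *\<^sub>R axis j 1) - g (x + s *\<^sub>R axis i 1)
           - g (x + s *\<^sub>R axis j 1) + g x) - (s * s) *\<^sub>R pd j (pd i g) x) \<le> 9 * (s * s) * \<epsilon>"
proof -
  define w where "w = pd i g"
  define K where "K = pd j w"
  have dg: "dif g" using g by (rule smooth_dif)
  have dw: "dif w" unfolding w_def using g by (intro smooth_dif smooth_pd)
  have seg: "closed_segment 0 s = {0..s}" using s by (simp add: closed_segment_eq_real_ivl)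
  have nrm: "norm (x + \<sigma> *\<^sub>R axis i 1 + \<tau> *\<^sub>R axis j 1 - x) \<le> 2 * s"
    if "\<sigma> \<in> {0..s}" "\<tau> \<in> {0..s}" for \<sigma> \<tau>
  proof -
    have "norm (x + \<sigma> *\<^sub>R axis i 1 + \<tau> *\<^sub>R axis j 1 - x) = norm (\<sigma> *\<^sub>R axis i 1 + \<tau> *\<^sub>R (axis j 1 :: real^'n))"
      by (simp add: algebra_simps)
    also have "\<dots> \<le> norm (\<sigma> *\<^sub>R (axis i 1 :: real^'n)) + norm (\<tau> *\<^sub>R (axis j 1 :: real^'n))"
      by (rule norm_triangle_ineq)
    also have "\<dots> = \<bar>\<sigma>\<bar> + \<bar>\<tau>\<bar>" by simp
    finally show ?thesis using that by auto
  qed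
  define c where "c = s *\<^sub>R K x"
  define \<phi> where "\<phi> = (\<lambda>\<sigma>. g (x + \<sigma> *\<^sub>R axis i 1 + s *\<^sub>R axis j 1) - g (x + \<sigma> *\<^sub>R axis i 1))"
  define \<phi>' where "\<phi>' = (\<lambda>\<sigma>. w (x + \<sigma> *\<^sub>R axis i 1 + s *\<^sub>R axis j 1) - w (x + \<sigma> *\<^sub>R axis i 1))"
  have d\<phi>: "(\<phi> has_vector_derivative \<phi>' \<sigma>) (at \<sigma>)" for \<sigma>
  proof -
    have e: "\<And>\<sigma>. x + \<sigma> *\<^sub>R axis i 1 + s *\<^sub>R axis j 1 = (x + s *\<^sub>R axis j 1) + \<sigma> *\<^sub>R axis i 1"
      by (simp add: algebra_simps)
    have h1: "((\<lambda>\<sigma>. g ((x + s *\<^sub>R axis j 1) + \<sigma> *\<^sub>R axis i 1)) has_vector_derivative pd i g ((x + s *\<^sub>R axis j 1) + \<sigma> *\<^sub>R axis i 1)) (at \<sigma>)"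
      by (rule dif_hvd_at[OF dg])
    have h2: "((\<lambda>\<sigma>. g (x + \<sigma> *\<^sub>R axis i 1)) has_vector_derivative pd i g (x + \<sigma> *\<^sub>R axis i 1)) (at \<sigma>)"
      using dif_hvd_at[OF dg, of x i \<sigma>] by simp
    have h3: "\<phi> = (\<lambda>\<sigma>. g ((x + s *\<^sub>R axis j 1) + \<sigma> *\<^sub>R axis i 1) - g (x + \<sigma> *\<^sub>R axis i 1))"
      unfolding \<phi>_def by (rule ext) (simp only: e)
    have h4: "\<phi>' \<sigma> = pd i g ((x + s *\<^sub>R axis j 1) + \<sigma> *\<^sub>R axis i 1) - pd i g (x + \<sigma> *\<^sub>R axis i 1)"
      unfolding \<phi>'_def w_def by (simp only: e)
    show ?thesis unfolding h3 h4 by (rule has_vector_derivative_diff[OF h1 h2])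
  qed
  have b\<phi>: "norm (\<phi>' \<sigma> - c) \<le> 3 * s * \<epsilon>" if "\<sigma> \<in> {0..s}" for \<sigma>
  proof -
    have "norm (w (x + \<sigma> *\<^sub>R axis i 1 + s *\<^sub>R axis j 1) - w (x + \<sigma> *\<^sub>R axis i 1 + 0 *\<^sub>R axis j 1) - s *\<^sub>R K x)
          \<le> 3 * \<bar>s\<bar> * \<epsilon>"
    proof (rule mvt_lin[where \<psi>="\<lambda>\<tau>. w (x + \<sigma> *\<^sub>R axis i 1 + \<tau> *\<^sub>R axis j 1)"
          and \<psi>'="\<lambda>\<tau>. K (x + \<sigma> *\<^sub>R axis i 1 + \<tau> *\<^sub>R axis j 1)"])
      fix \<tau> assume "\<tau> \<in> closed_segment 0 s"
      show "((\<lambda>\<tau>. w (x + \<sigma> *\<^sub>R axis i 1 + \<tau> *\<^sub>R axis j 1)) has_vector_derivative K (x + \<sigma> *\<^sub>R axis i 1 + \<tau> *\<^sub>R axis j 1)) (at \<tau>)"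
        unfolding K_def by (intro dif_hvd_at dw)
      show "norm (K (x + \<sigma> *\<^sub>R axis i 1 + \<tau> *\<^sub>R axis j 1) - K x) \<le> \<epsilon>"
        unfolding K_def w_def using cK nrm \<open>\<tau> \<in> closed_segment 0 s\<close> that seg by auto
    qed
    then show ?thesis using s unfolding \<phi>'_def c_def by simp
  qed
  have "norm (\<phi> s - \<phi> 0 - s *\<^sub>R c) \<le> 3 * \<bar>s\<bar> * (3 * s * \<epsilon>)"
    by (rule mvt_lin[where \<psi>'=\<phi>']) (use d\<phi> b\<phi> seg in auto)
  moreover have "\<phi> s - \<phi> 0 - s *\<^sub>R c = (g (x + s *\<^sub>R axis i 1 + s *\<^sub>R axis j 1) - g (x + s *\<^sub>R axis i 1)
           - g (x + s *\<^sub>R axis j 1) + g x) - (s * s) *\<^sub>R pd j (pd i g) x"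
    unfolding \<phi>_def c_def K_def w_def by (simp add: aux4)
  ultimately show ?thesis using s by simp
qed

lemma schwarz_pt:
  fixes g :: "real^'n::finite \<Rightarrow> complex"
  assumes g: "smooth_fun g"
  shows "pd j (pd i g) x = pd i (pd j g) x"
proof (rule ccontr)
  define H where "H = pd j (pd i g)"
  define K where "K = pd i (pd j g)"
  assume ne: "pd j (pd i g) x \<noteq> pd i (pd j g) x"
  define \<epsilon> where "\<epsilon> = norm (H x - K x) / 20"
  have ep: "\<epsilon> > 0" using ne unfolding \<epsilon>_def H_def K_def by simp
  have cH: "continuous_on UNIV H" unfolding H_def using g by (intro smooth_cont smooth_pd)
  have cK: "continuous_on UNIV K" unfolding K_def using g by (intro smooth_cont smooth_pd)
  obtain d1 where d1: "d1 > 0" "\<And>y. dist y x < d1 \<Longrightarrow> dist (H y) (H x) < \<epsilon>"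
    using cH ep unfolding continuous_on_iff by (meson UNIV_I)
  obtain d2 where d2: "d2 > 0" "\<And>y. dist y x < d2 \<Longrightarrow> dist (K y) (K x) < \<epsilon>"
    using cK ep unfolding continuous_on_iff by (meson UNIV_I)
  define s where "s = min d1 d2 / 3"
  have s: "s > 0" using d1 d2 unfolding s_def by simp
  have 1: "norm ((g (x + s *\<^sub>R axis i 1 + s *\<^sub>R axis j 1) - g (x + s *\<^sub>R axis i 1)
           - g (x + s *\<^sub>R axis j 1) + g x) - (s * s) *\<^sub>R H x) \<le> 9 * (s * s) * \<epsilon>"
    unfolding H_def
  proof (rule mixed[OF g s])
    fix y :: "real^'n" assume "norm (y - x) \<le> 2 * s"
    then have "dist y x < d1" using s d1 d2 unfolding s_def dist_norm using min.cobounded1[of d1 d2] by linarith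
    then show "norm (pd j (pd i g) y - pd j (pd i g) x) \<le> \<epsilon>"
      using d1 unfolding H_def dist_norm by force
  qed
  have 2: "norm ((g (x + s *\<^sub>R axis j 1 + s *\<^sub>R axis i 1) - g (x + s *\<^sub>R axis j 1)
           - g (x + s *\<^sub>R axis i 1) + g x) - (s * s) *\<^sub>R K x) \<le> 9 * (s * s) * \<epsilon>"
    unfolding K_def
  proof (rule mixed[OF g s])
    fix y :: "real^'n" assume "norm (y - x) \<le> 2 * s"
    then have "dist y x < d2" using s d1 d2 unfolding s_def dist_norm using min.cobounded2[of d1 d2] by linarith
    then show "norm (pd i (pd j g) y - pd i (pd j g) x) \<le> \<epsilon>"
      using d2 unfolding K_def dist_norm by force
  qed
  define D where "D = g (x + s *\<^sub>R axis i 1 + s *\<^sub>R axis j 1) - g (x + s *\<^sub>R axis i 1)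
           - g (x + s *\<^sub>R axis j 1) + g x"
  have h2b: "norm (D - (s * s) *\<^sub>R K x) \<le> 9 * (s * s) * \<epsilon>"
  proof -
    have eqD: "x + s *\<^sub>R axis j 1 + s *\<^sub>R axis i 1 = x + s *\<^sub>R axis i 1 + s *\<^sub>R (axis j 1::real^'n)"
      by (simp add: add_ac)
    have "D = g (x + s *\<^sub>R axis j 1 + s *\<^sub>R axis i 1) - g (x + s *\<^sub>R axis j 1)
           - g (x + s *\<^sub>R axis i 1) + g x"
      unfolding D_def eqD by (rule aux5)
    then show ?thesis using 2 by simp
  qed
  have "(s * s) * norm (H x - K x) = norm ((s * s) *\<^sub>R H x - (s * s) *\<^sub>R K x)"
  proof -
    have "(s * s) *\<^sub>R H x - (s * s) *\<^sub>R K x = (s * s) *\<^sub>R (H x - K x)" by (simp add: scaleR_diff_right)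
    then show ?thesis by (simp add: abs_mult_self_eq)
  qed
  also have "\<dots> = norm ((D - (s * s) *\<^sub>R K x) - (D - (s * s) *\<^sub>R H x))" by (simp add: algebra_simps)
  also have "\<dots> \<le> norm (D - (s * s) *\<^sub>R K x) + norm (D - (s * s) *\<^sub>R H x)" by (rule norm_triangle_ineq4)
  also have "\<dots> \<le> 18 * (s * s) * \<epsilon>" using 1 h2b unfolding D_def by simp
  finally have "(s * s) * norm (H x - K x) \<le> (s * s) * (18 * \<epsilon>)" by simp
  then have "norm (H x - K x) \<le> 18 * \<epsilon>" using s by simp
  then show False using ep unfolding \<epsilon>_def by simp
qed

lemma schwarz: "smooth_fun g \<Longrightarrow> pd j (pd i g) = pd i (pd j g)"
  using schwarz_pt by blast

lemma pdl_pd_commute: "smooth_fun g \<Longrightarrow> pdl ys (pd x g) = pd x (pdl ys g)"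
proof (induction ys)
  case Nil then show ?case by simp
next
  case (Cons y ys)
  then show ?case using schwarz[OF smooth_pdl[OF Cons.prems, of ys], of x y] by simp
qed

lemma pdl_perm: "smooth_fun f \<Longrightarrow> mset xs = mset ys \<Longrightarrow> pdl xs f = pdl ys f"
proof (induction xs arbitrary: ys)
  case Nil then show ?case by simp
next
  case (Cons x xs)
  then have "x \<in> set ys" by (metis list.set_intros(1) set_mset_mset)
  then obtain ys1 ys2 where ys: "ys = ys1 @ x # ys2" by (meson split_list)
  have "mset xs = mset (ys1 @ ys2)" using Cons.prems ys by simp
  then have "pdl xs f = pdl (ys1 @ ys2) f" using Cons by blast
  moreover have "pdl ys f = pd x (pdl (ys1 @ ys2) f)"
    using ys pdl_append pdl_pd_commute[OF smooth_pdl[OF Cons.prems(1), of ys2], of ys1 x]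
    by (simp add: pdl_append)
  ultimately show ?case by simp
qed



lemma per_add: "periodic_torus f \<Longrightarrow> periodic_torus g \<Longrightarrow> periodic_torus (\<lambda>x. f x + g x)"
  unfolding periodic_torus_def by simp
lemma per_mult: "periodic_torus f \<Longrightarrow> periodic_torus g \<Longrightarrow> periodic_torus (\<lambda>x. f x * g x)"
  unfolding periodic_torus_def by simp
lemma per_cmul: "periodic_torus f \<Longrightarrow> periodic_torus (\<lambda>x. c * f x)"
  unfolding periodic_torus_def by simp
lemma per_const: "periodic_torus (\<lambda>x. c)"
  unfolding periodic_torus_def by simp

lemma per_pd: 
  assumes "periodic_torus f" shows "periodic_torus (pd i f)"
  unfolding periodic_torus_def
proof (intro allI)
  fix x j
  have "(\<lambda>t. f (x + (2*pi) *\<^sub>R axis j 1 + t *\<^sub>R axis i 1)) = (\<lambda>t. f (x + t *\<^sub>R axis i 1))"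
  proof
    fix t
    have eq: "x + (2*pi) *\<^sub>R axis j 1 + t *\<^sub>R axis i 1 = (x + t *\<^sub>R axis i 1) + (2*pi) *\<^sub>R axis j 1"
      by (simp add: add_ac)
    have p: "f ((x + t *\<^sub>R axis i 1) + (2*pi) *\<^sub>R axis j 1) = f (x + t *\<^sub>R axis i 1)"
      using assms unfolding periodic_torus_def by blast
    show "f (x + (2*pi) *\<^sub>R axis j 1 + t *\<^sub>R axis i 1) = f (x + t *\<^sub>R axis i 1)"
      by (subst eq) (rule p)
  qed
  then show "pd i f (x + (2*pi) *\<^sub>R axis j 1) = pd i f x"
    unfolding pd_def by simp
qed

lemma per_pdl: "periodic_torus f \<Longrightarrow> periodic_torus (pdl xs f)"
  by (induction xs) (auto intro: per_pd)

definition canon :: "('n::finite \<Rightarrow> nat) \<Rightarrow> 'n list" where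
  "canon \<alpha> = (SOME xs. \<forall>i. count_list xs i = \<alpha> i)"

lemma count_rep: "count_list (replicate n i) j = (if i = j then n else 0)"
  by (induction n) auto

lemma canon_ex: "\<exists>xs. \<forall>i. count_list xs i = (\<alpha>::'n::finite \<Rightarrow> nat) i"
proof -
  obtain ys :: "'n list" where ys: "set ys = UNIV" "distinct ys"
    using finite_distinct_list[of "UNIV :: 'n set"] by auto
  have "count_list (concat (map (\<lambda>j. replicate (\<alpha> j) j) zs)) i = (if i \<in> set zs then \<alpha> i else 0)"
    if "distinct zs" for zs i
    using that by (induction zs) (auto simp: count_list_0_iff count_rep)
  then show ?thesis using ys
    by (intro exI[of _ "concat (map (\<lambda>j. replicate (\<alpha> j) j) ys)"]) auto
qed

lemma canon_count: "count_list (canon \<alpha>) i = \<alpha> i"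
  unfolding canon_def using someI_ex[OF canon_ex[of \<alpha>]] by blast

lemma Dm_canon: "Dm \<alpha> f = pdl (canon \<alpha>) f"
  unfolding Dm_def canon_def ..

lemma length_count: "length xs = (\<Sum>i\<in>UNIV. count_list xs (i::'n::finite))"
proof (induction xs)
  case Nil then show ?case by simp
next
  case (Cons x xs)
  have "(\<Sum>i\<in>UNIV. count_list (x # xs) i) = (\<Sum>i\<in>UNIV. count_list xs i + (if x = i then 1 else 0))"
    by (rule sum.cong) auto
  also have "\<dots> = (\<Sum>i\<in>UNIV. count_list xs i) + 1"
    by (simp add: sum.distrib)
  finally show ?case using Cons by simp
qed

lemma mlen_canon: "length (canon \<alpha>) = mlen \<alpha>"
  unfolding mlen_def length_count canon_count ..

lemma pdl_Dm: "smooth_fun f \<Longrightarrow> pdl xs f = Dm (\<lambda>i. count_list xs i) f"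
  unfolding Dm_canon
  by (rule pdl_perm) (auto simp: multiset_eq_iff count_mset canon_count)

lemma Dm_zero: "Dm (\<lambda>i. 0) f = f"
proof -
  have "canon (\<lambda>i. 0::nat) = ([] :: 'a list)"
    using canon_count[of "\<lambda>i. 0::nat"] by (metis count_list_0_iff last_in_set)
  then show ?thesis unfolding Dm_canon by simp
qed

lemma smooth_Dm: "smooth_fun f \<Longrightarrow> smooth_fun (Dm \<alpha> f)"
  unfolding Dm_canon by (rule smooth_pdl)

lemma per_Dm: "periodic_torus f \<Longrightarrow> periodic_torus (Dm \<alpha> f)"
  unfolding Dm_canon by (rule per_pdl)

lemma Dm_add: "smooth_fun f \<Longrightarrow> smooth_fun g \<Longrightarrow> Dm \<alpha> (\<lambda>y. f y + g y) = (\<lambda>y. Dm \<alpha> f y + Dm \<alpha> g y)"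
  unfolding Dm_canon by (rule pdl_add)

lemma Dm_cmul: "smooth_fun f \<Longrightarrow> Dm \<alpha> (\<lambda>y. c * f y) = (\<lambda>y. c * Dm \<alpha> f y)"
  unfolding Dm_canon by (rule pdl_cmul)



lemma cont_int: "continuous_on UNIV F \<Longrightarrow> (F::real^'n::finite \<Rightarrow> complex) integrable_on cbox u w"
  by (rule integrable_continuous) (rule continuous_on_subset, auto)

lemma cbox_cart_iff: "(x::real^'n::finite) \<in> cbox a b \<longleftrightarrow> (a$i \<le> x$i \<and> x$i \<le> b$i) \<and> (\<forall>j. j \<noteq> i \<longrightarrow> a$j \<le> x$j \<and> x$j \<le> b$j)"
proof -
  have *: "(\<forall>j. P j) = (P i \<and> (\<forall>j. j \<noteq> i \<longrightarrow> P j))" for P :: "'n \<Rightarrow> bool" by metis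
  show ?thesis unfolding mem_box_cart by (rule *)
qed

lemma shift_int:
  fixes F :: "real^'n::finite \<Rightarrow> complex"
  assumes per: "periodic_torus F" and cont: "continuous_on UNIV F" and t: "0 \<le> t" "t \<le> 2*pi"
  shows "integral (cbox 0 (\<chi> j. 2*pi)) (\<lambda>x. F (x + t *\<^sub>R axis i 1)) = integral (cbox 0 (\<chi> j. 2*pi)) F"
proof -
  define b :: "real^'n" where "b = (\<chi> j. 2*pi)"
  define e :: "real^'n" where "e = axis i 1"
  define b1 :: "real^'n" where "b1 = (\<chi> j. if j = i then t else 2*pi)"
  have eB: "e \<in> Basis" unfolding e_def by simp
  have xe: "x \<bullet> e = x $ i" for x unfolding e_def by (simp add: inner_axis)
  have ev: "(c *\<^sub>R e) $ j = (if j = i then c else 0)" for c j unfolding e_def by (simp add: axis_def)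
  have ev2: "e $ j = (if j = i then 1 else 0)" for j unfolding e_def by (simp add: axis_def)
  have int: "F integrable_on cbox u w" for u w by (rule cont_int[OF cont])
  have s1: "cbox (t *\<^sub>R e) (b + t *\<^sub>R e) \<inter> {x. x \<bullet> e \<le> 2*pi} = cbox 0 b \<inter> {x. t \<le> x \<bullet> e}"
    using t by (auto simp del: vector_scaleR_component simp: cbox_cart_iff[of _ _ _ i] b_def b1_def xe ev)
  have s2: "cbox (t *\<^sub>R e) (b + t *\<^sub>R e) \<inter> {x. 2*pi \<le> x \<bullet> e} = cbox ((2*pi) *\<^sub>R e + 0) ((2*pi) *\<^sub>R e + b1)"
    using t by (auto simp del: vector_scaleR_component simp: cbox_cart_iff[of _ _ _ i] b_def b1_def xe ev)
  have s3: "cbox 0 b \<inter> {x. x \<bullet> e \<le> t} = cbox 0 b1"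
    using t by (auto simp del: vector_scaleR_component simp: cbox_cart_iff[of _ _ _ i] b_def b1_def xe ev)
  have Fshift: "F \<circ> (+) ((2*pi) *\<^sub>R e) = F"
  proof
    fix x show "(F \<circ> (+) ((2*pi) *\<^sub>R e)) x = F x"
      using per unfolding periodic_torus_def e_def by (simp add: add.commute)
  qed
  have I2: "(F has_integral integral (cbox 0 b1) F) (cbox ((2*pi) *\<^sub>R e + 0) ((2*pi) *\<^sub>R e + b1))"
  proof -
    have "((F \<circ> (+) ((2*pi) *\<^sub>R e)) has_integral integral (cbox 0 b1) F) (cbox 0 b1)"
      unfolding Fshift using int by (simp add: integrable_integral)
    then show ?thesis using has_integral_shift_cbox_iff[of F "(2*pi) *\<^sub>R e" "integral (cbox 0 b1) F" 0 b1]
      by (simp add: add.commute)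
  qed
  have I1: "(F has_integral integral (cbox 0 b \<inter> {x. t \<le> x \<bullet> e}) F) (cbox (t *\<^sub>R e) (b + t *\<^sub>R e) \<inter> {x. x \<bullet> e \<le> 2*pi})"
    unfolding s1 using integrable_split(2)[OF int eB] by (simp add: integrable_integral)
  have "(F has_integral (integral (cbox 0 b \<inter> {x. t \<le> x \<bullet> e}) F + integral (cbox 0 b1) F)) (cbox (t *\<^sub>R e) (b + t *\<^sub>R e))"
    by (rule has_integral_split[OF I1 _ eB]) (use I2 s2 in simp)
  then have J: "((F \<circ> (+) (t *\<^sub>R e)) has_integral (integral (cbox 0 b \<inter> {x. t \<le> x \<bullet> e}) F + integral (cbox 0 b1) F)) (cbox 0 b)"
    using has_integral_shift_cbox_iff[of F "t *\<^sub>R e" _ 0 b] by (simp add: add.commute)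
  have K: "(F has_integral (integral (cbox 0 b \<inter> {x. x \<bullet> e \<le> t}) F + integral (cbox 0 b \<inter> {x. t \<le> x \<bullet> e}) F)) (cbox 0 b)"
    by (rule has_integral_split[OF _ _ eB]) (use integrable_split[OF int eB] in \<open>auto simp: integrable_integral\<close>)
  have "(\<lambda>x. F (x + t *\<^sub>R axis i 1)) = F \<circ> (+) (t *\<^sub>R e)"
    unfolding e_def by (auto simp: add.commute)
  then show ?thesis
    using integral_unique[OF J] integral_unique[OF K] unfolding b_def[symmetric] s3 by (simp add: add.commute)
qed

lemma int_pd_zero:
  fixes F :: "real^'n::finite \<Rightarrow> complex"
  assumes per: "periodic_torus F" and cF: "continuous_on UNIV F" and dF: "dif F"
    and cD: "continuous_on UNIV (pd i F)"
  shows "torus_integral (pd i F) = 0"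
proof -
  define b :: "real^'n" where "b = (\<chi> j. 2*pi)"
  define T where "T = cbox 0 b"
  define D where "D = pd i F"
  define e :: "real^'n" where "e = axis i 1"
  have bound: "norm (integral T D) \<le> 3 * \<epsilon> * measure lborel T" if ep: "\<epsilon> > 0" for \<epsilon>
  proof -
    define K where "K = cbox (0::real^'n) (\<chi> j. 2*pi + 1)"
    have "uniformly_continuous_on K D"
      unfolding K_def D_def by (rule compact_uniformly_continuous[OF continuous_on_subset[OF cD]]) auto
    then obtain \<delta> where d: "\<delta> > 0" "\<And>x y. x \<in> K \<Longrightarrow> y \<in> K \<Longrightarrow> dist y x < \<delta> \<Longrightarrow> dist (D y) (D x) < \<epsilon>"
      unfolding uniformly_continuous_on_def using ep by blast
    define t where "t = min (\<delta>/2) 1"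
    have t: "t > 0" "t \<le> 1" "t < \<delta>" using d unfolding t_def by auto
    have pt: "norm (F (x + t *\<^sub>R e) - F x - t *\<^sub>R D x) \<le> 3 * t * \<epsilon>" if x: "x \<in> T" for x
    proof -
      have "norm (F (x + t *\<^sub>R e) - F (x + 0 *\<^sub>R e) - t *\<^sub>R D x) \<le> 3 * \<bar>t\<bar> * \<epsilon>"
      proof (rule mvt_lin[where \<psi>'="\<lambda>\<sigma>. D (x + \<sigma> *\<^sub>R e)"])
        fix \<sigma> assume s: "\<sigma> \<in> closed_segment 0 t"
        show "((\<lambda>\<sigma>. F (x + \<sigma> *\<^sub>R e)) has_vector_derivative D (x + \<sigma> *\<^sub>R e)) (at \<sigma>)"
          unfolding D_def e_def by (rule dif_hvd_at[OF dF])
        have s': "0 \<le> \<sigma>" "\<sigma> \<le> t" using s t by (auto simp: closed_segment_eq_real_ivl)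
        have xK: "x \<in> K" using x unfolding T_def K_def b_def mem_box_cart by (auto intro: order_trans)
        have xsK: "x + \<sigma> *\<^sub>R e \<in> K"
          unfolding K_def mem_box_cart
        proof
          fix j
          have "0 \<le> x $ j" "x $ j \<le> 2*pi" using x unfolding T_def b_def mem_box_cart by auto
          then show "(0::real^'n) $ j \<le> (x + \<sigma> *\<^sub>R e) $ j \<and> (x + \<sigma> *\<^sub>R e) $ j \<le> (\<chi> j. 2*pi + 1) $ j"
            using s' t unfolding e_def by (auto simp: axis_def)
        qed
        have "dist (x + \<sigma> *\<^sub>R e) x < \<delta>" using s' t unfolding e_def dist_norm by simp
        then show "norm (D (x + \<sigma> *\<^sub>R e) - D x) \<le> \<epsilon>"
          using d(2)[OF xK xsK] unfolding dist_norm by simp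
      qed
      then show ?thesis using t by simp
    qed
    have iF: "F integrable_on T" unfolding T_def by (rule cont_int[OF cF])
    have iD: "D integrable_on T" unfolding T_def D_def by (rule cont_int[OF cD])
    have cFs: "continuous_on UNIV (\<lambda>x. F (x + t *\<^sub>R e))"
      by (rule continuous_on_compose2[OF cF]) (auto intro!: continuous_intros)
    have iFs: "(\<lambda>x. F (x + t *\<^sub>R e)) integrable_on T" unfolding T_def by (rule cont_int[OF cFs])
    have sh: "integral T (\<lambda>x. F (x + t *\<^sub>R e)) = integral T F"
      unfolding T_def b_def e_def by (rule shift_int[OF per cF]) (use t pi_gt3 in auto)
    have "integral T (\<lambda>x. F (x + t *\<^sub>R e) - F x - t *\<^sub>R D x) = integral T (\<lambda>x. F (x + t *\<^sub>R e)) - integral T F - t *\<^sub>R integral T D"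
    proof -
      have a: "(\<lambda>x. F (x + t *\<^sub>R e) - F x) integrable_on T" using iFs iF by (rule integrable_diff)
      have c: "(\<lambda>x. t *\<^sub>R D x) integrable_on T" using iD by (rule integrable_cmul)
      have "integral T (\<lambda>x. F (x + t *\<^sub>R e) - F x - t *\<^sub>R D x) = integral T (\<lambda>x. F (x + t *\<^sub>R e) - F x) - integral T (\<lambda>x. t *\<^sub>R D x)"
        by (rule integral_diff[OF a c])
      also have "integral T (\<lambda>x. F (x + t *\<^sub>R e) - F x) = integral T (\<lambda>x. F (x + t *\<^sub>R e)) - integral T F"
        by (rule integral_diff[OF iFs iF])
      finally show ?thesis by simp
    qed
    also have "\<dots> = - (t *\<^sub>R integral T D)" using sh by simp
    finally have eqI: "integral T (\<lambda>x. F (x + t *\<^sub>R e) - F x - t *\<^sub>R D x) = - (t *\<^sub>R integral T D)" .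
    have "norm (integral T (\<lambda>x. F (x + t *\<^sub>R e) - F x - t *\<^sub>R D x)) \<le> (3 * t * \<epsilon>) * measure lborel T"
      unfolding T_def
      by (rule has_integral_bound) (use t ep pt iF iD iFs in \<open>auto simp: T_def integrable_diff intro!: integrable_integral\<close>)
    then have "t * norm (integral T D) \<le> t * (3 * \<epsilon> * measure lborel T)" using eqI t by (simp add: mult_ac)
    then show ?thesis using t by simp
  qed
  have "norm (integral T D) = 0"
  proof (rule ccontr)
    assume "norm (integral T D) \<noteq> 0"
    then have N: "norm (integral T D) > 0" by simp
    define \<epsilon> where "\<epsilon> = norm (integral T D) / (3 * (measure lborel T + 1))"
    have ep: "\<epsilon> > 0" unfolding \<epsilon>_def using N by (simp add: add_nonneg_pos)
    have "3 * \<epsilon> * measure lborel T < norm (integral T D)"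
    proof -
      have "3 * \<epsilon> * measure lborel T = norm (integral T D) * (measure lborel T / (measure lborel T + 1))"
      proof -
        have c0: "0 \<le> measure lborel T" by simp
        then have "1 + measure lborel T \<noteq> 0" "3 + 3 * measure lborel T \<noteq> 0" by linarith+
        then show ?thesis unfolding \<epsilon>_def by (simp add: field_simps)
      qed
      also have "\<dots> < norm (integral T D) * 1"
        using N by (intro mult_strict_left_mono) (auto simp: add_nonneg_pos)
      finally show ?thesis by simp
    qed
    then show False using bound[OF ep] by simp
  qed
  then show ?thesis unfolding torus_integral_def T_def b_def D_def by simp
qed



definition sp :: "(real^'n::finite \<Rightarrow> complex) \<Rightarrow> bool" where
  "sp f \<longleftrightarrow> smooth_fun f \<and> periodic_torus f"

lemma sp_mult: "sp f \<Longrightarrow> sp g \<Longrightarrow> sp (\<lambda>x. f x * g x)"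
  unfolding sp_def by (auto intro: smooth_mult per_mult)
lemma sp_pd: "sp f \<Longrightarrow> sp (pd i f)"
  unfolding sp_def by (auto intro: smooth_pd per_pd)
lemma sp_pdl: "sp f \<Longrightarrow> sp (pdl xs f)"
  unfolding sp_def by (auto intro: smooth_pdl per_pdl)
lemma sp_Dm: "sp f \<Longrightarrow> sp (Dm \<alpha> f)"
  unfolding sp_def by (auto intro: smooth_Dm per_Dm)
lemma sp_cont: "sp f \<Longrightarrow> continuous_on UNIV f"
  unfolding sp_def by (auto intro: smooth_cont)
lemma sp_int: "sp f \<Longrightarrow> f integrable_on cbox u w"
  by (rule cont_int[OF sp_cont])

lemma ibp1:
  assumes g: "sp g" and h: "sp h"
  shows "torus_integral (\<lambda>x. pd i g x * h x) = - torus_integral (\<lambda>x. g x * pd i h x)"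
proof -
  define F where "F = (\<lambda>x. g x * h x)"
  have sF: "sp F" unfolding F_def using g h by (rule sp_mult)
  have pF: "pd i F = (\<lambda>x. pd i g x * h x + g x * pd i h x)"
    unfolding F_def using g h unfolding sp_def by (intro pd_mult smooth_dif) auto
  have "torus_integral (pd i F) = 0"
    using sF unfolding sp_def by (intro int_pd_zero smooth_cont smooth_dif smooth_pd) auto
  moreover have "torus_integral (pd i F) = torus_integral (\<lambda>x. pd i g x * h x) + torus_integral (\<lambda>x. g x * pd i h x)"
    unfolding pF torus_integral_def
    by (rule integral_add) (use g h in \<open>auto intro!: sp_int sp_mult sp_pd\<close>)
  ultimately show ?thesis by (simp add: add_eq_0_iff)
qed

lemma ibp_list:
  assumes g: "sp g"
  shows "sp h \<Longrightarrow> torus_integral (\<lambda>x. pdl xs g x * h x) = (-1)^length xs * torus_integral (\<lambda>x. g x * pdl (rev xs) h x)"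
proof (induction xs arbitrary: h)
  case Nil then show ?case by simp
next
  case (Cons i xs)
  have "torus_integral (\<lambda>x. pdl (i # xs) g x * h x) = - torus_integral (\<lambda>x. pdl xs g x * pd i h x)"
    using ibp1[OF sp_pdl[OF g] Cons.prems] by simp
  also have "\<dots> = - ((-1)^length xs * torus_integral (\<lambda>x. g x * pdl (rev xs) (pd i h) x))"
    using Cons.IH[OF sp_pd[OF Cons.prems]] by simp
  also have "pdl (rev xs) (pd i h) = pdl (rev (i # xs)) h"
    by (simp add: pdl_append)
  finally show ?case by simp
qed

lemma ibp_Dm:
  assumes g: "sp g" and h: "sp h"
  shows "torus_integral (\<lambda>x. Dm \<alpha> g x * h x) = (-1)^mlen \<alpha> * torus_integral (\<lambda>x. g x * Dm \<alpha> h x)"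
proof -
  have "pdl (rev (canon \<alpha>)) h = pdl (canon \<alpha>) h"
    using h unfolding sp_def by (intro pdl_perm) auto
  then show ?thesis
    unfolding Dm_canon using ibp_list[OF g h, of "canon \<alpha>"] by (simp add: mlen_canon)
qed

lemma finite_mlen: "finite {\<alpha>::'n::finite \<Rightarrow> nat. mlen \<alpha> \<le> m}"
proof (rule finite_subset)
  show "{\<alpha>::'n \<Rightarrow> nat. mlen \<alpha> \<le> m} \<subseteq> Pi\<^sub>E UNIV (\<lambda>_. {..m})"
  proof
    fix \<alpha> :: "'n \<Rightarrow> nat" assume "\<alpha> \<in> {\<alpha>. mlen \<alpha> \<le> m}"
    then have "\<alpha> i \<le> m" for i
      unfolding mlen_def using member_le_sum[of i UNIV \<alpha>] by auto
    then show "\<alpha> \<in> Pi\<^sub>E UNIV (\<lambda>_. {..m})" by (simp add: PiE_UNIV_domain)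
  qed
  show "finite (Pi\<^sub>E (UNIV::'n set) (\<lambda>_. {..m}))" by (rule finite_PiE) auto
qed

lemma ibp_L:
  fixes a :: "('n::finite \<Rightarrow> nat) \<Rightarrow> real^'n \<Rightarrow> complex"
  assumes u: "sp u" and v: "sp v" and a: "\<And>\<alpha>. mlen \<alpha> \<le> m \<Longrightarrow> sp (a \<alpha>)"
  shows "torus_integral (\<lambda>x. Lop m a u x * v x) = torus_integral (\<lambda>x. u x * tLop m a v x)"
proof -
  define A where "A = {\<alpha>::'n \<Rightarrow> nat. mlen \<alpha> \<le> m}"
  have fA: "finite A" unfolding A_def by (rule finite_mlen)
  have "torus_integral (\<lambda>x. Lop m a u x * v x) = torus_integral (\<lambda>x. \<Sum>\<alpha>\<in>A. Dm \<alpha> u x * (a \<alpha> x * v x))"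
    unfolding Lop_def A_def by (simp add: sum_distrib_left sum_distrib_right mult_ac)
  also have "\<dots> = (\<Sum>\<alpha>\<in>A. torus_integral (\<lambda>x. Dm \<alpha> u x * (a \<alpha> x * v x)))"
    unfolding torus_integral_def
    by (rule integral_sum[OF fA]) (use u v a in \<open>auto simp: A_def intro!: sp_int sp_mult sp_Dm\<close>)
  also have "\<dots> = (\<Sum>\<alpha>\<in>A. (-1)^mlen \<alpha> * torus_integral (\<lambda>x. u x * Dm \<alpha> (\<lambda>y. a \<alpha> y * v y) x))"
    by (rule sum.cong) (use u v a in \<open>auto simp: A_def intro!: ibp_Dm sp_mult\<close>)
  also have "\<dots> = (\<Sum>\<alpha>\<in>A. torus_integral (\<lambda>x. (-1)^mlen \<alpha> * (u x * Dm \<alpha> (\<lambda>y. a \<alpha> y * v y) x)))"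
    unfolding torus_integral_def by simp
  also have "\<dots> = torus_integral (\<lambda>x. \<Sum>\<alpha>\<in>A. (-1)^mlen \<alpha> * (u x * Dm \<alpha> (\<lambda>y. a \<alpha> y * v y) x))"
    unfolding torus_integral_def
    by (rule integral_sum[symmetric, OF fA]) (use u v a in \<open>auto simp: A_def intro!: sp_int sp_mult sp_Dm integrable_on_mult_right\<close>)
  also have "\<dots> = torus_integral (\<lambda>x. u x * tLop m a v x)"
    unfolding tLop_def A_def by (simp add: sum_distrib_left mult_ac)
  finally show ?thesis .
qed



definition rho :: "(real \<Rightarrow> real) \<Rightarrow> real \<Rightarrow> ('n::finite \<Rightarrow> nat) \<Rightarrow> real" where
  "rho \<omega> lam \<alpha> = exp (- lam * phistar \<omega> (real (mlen \<alpha>) / lam))"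

definition wn :: "(real \<Rightarrow> real) \<Rightarrow> real \<Rightarrow> (real^'n::finite \<Rightarrow> complex) \<Rightarrow> real" where
  "wn \<omega> lam f = real_of_ereal (wnorm \<omega> lam f)"

lemma rho_pos: "0 < rho \<omega> lam \<alpha>"
  unfolding rho_def by simp

lemma wnorm_ge: "ereal (cmod (Dm \<alpha> f x) * rho \<omega> lam \<alpha>) \<le> wnorm \<omega> lam f"
  unfolding wnorm_def rho_def by (rule SUP_upper2[where i=x, OF UNIV_I], rule SUP_upper2[where i=\<alpha>, OF UNIV_I]) simp

lemma wnorm_le: "(\<And>x \<alpha>. cmod (Dm \<alpha> f x) * rho \<omega> lam \<alpha> \<le> B) \<Longrightarrow> wnorm \<omega> lam f \<le> ereal B"
  unfolding wnorm_def rho_def by (intro SUP_least) simp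

lemma wnorm_nonneg: "0 \<le> wnorm \<omega> lam f"
proof -
  have "ereal 0 \<le> ereal (cmod (Dm \<alpha> f x) * rho \<omega> lam \<alpha>)" for \<alpha> x
    using rho_pos[of \<omega> lam \<alpha>] by simp
  then show ?thesis using wnorm_ge order_trans zero_ereal_def by metis
qed

lemma fin_wnorm: "wnorm \<omega> lam f < \<infinity> \<Longrightarrow> wnorm \<omega> lam f = ereal (wn \<omega> lam f)"
  unfolding wn_def using wnorm_nonneg[of \<omega> lam f]
  by (cases "wnorm \<omega> lam f") auto

lemma wn_ge: "wnorm \<omega> lam f < \<infinity> \<Longrightarrow> cmod (Dm \<alpha> f x) * rho \<omega> lam \<alpha> \<le> wn \<omega> lam f"
  using wnorm_ge[of \<alpha> f x \<omega> lam] fin_wnorm[of \<omega> lam f] by simp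

lemma wn_nonneg: "0 \<le> wn \<omega> lam f"
  unfolding wn_def using wnorm_nonneg[of \<omega> lam f] by (simp add: real_of_ereal_pos)

lemma wn_le:
  assumes "\<And>x \<alpha>. cmod (Dm \<alpha> f x) * rho \<omega> lam \<alpha> \<le> B"
  shows "wnorm \<omega> lam f < \<infinity>" "wn \<omega> lam f \<le> B"
proof -
  have w: "wnorm \<omega> lam f \<le> ereal B" by (rule wnorm_le[OF assms])
  then show "wnorm \<omega> lam f < \<infinity>" by (cases "wnorm \<omega> lam f") auto
  then show "wn \<omega> lam f \<le> B" using w fin_wnorm[of \<omega> lam f] by simp
qed

lemma sup_le: 
  fixes f :: "real^'n::finite \<Rightarrow> complex"
  assumes "wnorm \<omega> lam f < \<infinity>" shows "cmod (f x) \<le> wn \<omega> lam f / rho \<omega> lam (\<lambda>i::'n. 0)"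
proof -
  have "cmod (f x) * rho \<omega> lam (\<lambda>i::'n. 0) \<le> wn \<omega> lam f"
    using wn_ge[OF assms, of "\<lambda>i. 0" x] by (simp add: Dm_zero)
  then show ?thesis by (simp add: pos_le_divide_eq[OF rho_pos])
qed

lemma Eh_iff: "f \<in> Eh \<omega> h \<longleftrightarrow> sp f \<and> wnorm \<omega> (1/h) f < \<infinity>"
  unfolding Eh_def sp_def by auto

lemma Dm_zero_fun: "Dm \<alpha> (\<lambda>y. 0) = (\<lambda>y. 0)"
  using Dm_cmul[OF smooth_const[of 1], of \<alpha> 0] by simp

lemma wn_add:
  assumes f: "f \<in> Eh \<omega> h" and g: "g \<in> Eh \<omega> h"
  shows "(\<lambda>x. f x + g x) \<in> Eh \<omega> h" "wn \<omega> (1/h) (\<lambda>x. f x + g x) \<le> wn \<omega> (1/h) f + wn \<omega> (1/h) g"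
proof -
  have b: "cmod (Dm \<alpha> (\<lambda>x. f x + g x) x) * rho \<omega> (1/h) \<alpha> \<le> wn \<omega> (1/h) f + wn \<omega> (1/h) g" for \<alpha> x
  proof -
    have "Dm \<alpha> (\<lambda>x. f x + g x) x = Dm \<alpha> f x + Dm \<alpha> g x"
      using f g unfolding Eh_iff sp_def by (simp add: Dm_add)
    then have "cmod (Dm \<alpha> (\<lambda>x. f x + g x) x) * rho \<omega> (1/h) \<alpha> \<le> cmod (Dm \<alpha> f x) * rho \<omega> (1/h) \<alpha> + cmod (Dm \<alpha> g x) * rho \<omega> (1/h) \<alpha>"
      using rho_pos[of \<omega> "1/h" \<alpha>] by (simp add: distrib_right[symmetric] mult_right_mono norm_triangle_ineq)
    also have "\<dots> \<le> wn \<omega> (1/h) f + wn \<omega> (1/h) g"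
      using f g unfolding Eh_iff by (intro add_mono wn_ge) auto
    finally show ?thesis .
  qed
  show "(\<lambda>x. f x + g x) \<in> Eh \<omega> h"
    using f g wn_le(1)[OF b] unfolding Eh_iff sp_def by (auto intro: smooth_add per_add)
  show "wn \<omega> (1/h) (\<lambda>x. f x + g x) \<le> wn \<omega> (1/h) f + wn \<omega> (1/h) g"
    by (rule wn_le(2)[OF b])
qed

lemma wn_cmul:
  assumes f: "f \<in> Eh \<omega> h"
  shows "(\<lambda>x. c * f x) \<in> Eh \<omega> h" "wn \<omega> (1/h) (\<lambda>x. c * f x) \<le> cmod c * wn \<omega> (1/h) f"
proof -
  have b: "cmod (Dm \<alpha> (\<lambda>x. c * f x) x) * rho \<omega> (1/h) \<alpha> \<le> cmod c * wn \<omega> (1/h) f" for \<alpha> x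
  proof -
    have "Dm \<alpha> (\<lambda>x. c * f x) x = c * Dm \<alpha> f x"
      using f unfolding Eh_iff sp_def by (simp add: Dm_cmul)
    then have "cmod (Dm \<alpha> (\<lambda>x. c * f x) x) * rho \<omega> (1/h) \<alpha> = cmod c * (cmod (Dm \<alpha> f x) * rho \<omega> (1/h) \<alpha>)"
      by (simp add: norm_mult mult_ac)
    also have "\<dots> \<le> cmod c * wn \<omega> (1/h) f"
      using f unfolding Eh_iff by (intro mult_left_mono wn_ge) auto
    finally show ?thesis .
  qed
  show "(\<lambda>x. c * f x) \<in> Eh \<omega> h"
    using f wn_le(1)[OF b] unfolding Eh_iff sp_def by (auto intro: smooth_cmul per_cmul)
  show "wn \<omega> (1/h) (\<lambda>x. c * f x) \<le> cmod c * wn \<omega> (1/h) f"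
    by (rule wn_le(2)[OF b])
qed

lemma wn_diff:
  assumes f: "f \<in> Eh \<omega> h" and g: "g \<in> Eh \<omega> h"
  shows "(\<lambda>x. f x - g x) \<in> Eh \<omega> h" "wn \<omega> (1/h) (\<lambda>x. f x - g x) \<le> wn \<omega> (1/h) f + wn \<omega> (1/h) g"
proof -
  have e: "(\<lambda>x. f x - g x) = (\<lambda>x. f x + (-1) * g x)" by simp
  have g': "(\<lambda>x. (-1) * g x) \<in> Eh \<omega> h" "wn \<omega> (1/h) (\<lambda>x. (-1) * g x) \<le> wn \<omega> (1/h) g"
    using wn_cmul[OF g, of "-1"] by auto
  show "(\<lambda>x. f x - g x) \<in> Eh \<omega> h" unfolding e by (rule wn_add(1)[OF f g'(1)])
  show "wn \<omega> (1/h) (\<lambda>x. f x - g x) \<le> wn \<omega> (1/h) f + wn \<omega> (1/h) g"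
    unfolding e using wn_add(2)[OF f g'(1)] g'(2) by simp
qed

lemma wn_zero: "wn \<omega> lam (\<lambda>x::real^'n::finite. 0) = 0"
proof -
  have "wn \<omega> lam (\<lambda>x::real^'n. 0) \<le> 0" by (rule wn_le(2)) (simp add: Dm_zero_fun)
  then show ?thesis using wn_nonneg[of \<omega> lam "\<lambda>x::real^'n. 0"] by linarith
qed

lemma Eh_zero: "(\<lambda>x. 0) \<in> Eh \<omega> h"
  unfolding Eh_iff sp_def using wn_le(1)[where \<omega>=\<omega> and lam="1/h" and f="\<lambda>x. 0" and B=0]
  by (simp add: Dm_zero_fun smooth_const per_const)

lemma wn_eq0:
  assumes "f \<in> Eh \<omega> h" "wn \<omega> (1/h) f = 0" shows "f x = 0"
  using sup_le[of \<omega> "1/h" f x] assms unfolding Eh_iff by simp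



lemma smooth_diff: "smooth_fun f \<Longrightarrow> smooth_fun g \<Longrightarrow> smooth_fun (\<lambda>y. f y - g y)"
proof -
  assume f: "smooth_fun f" and g: "smooth_fun g"
  have "(\<lambda>y. f y - g y) = (\<lambda>y. f y + (-1) * g y)" by simp
  then show ?thesis using smooth_add[OF f smooth_cmul[OF g, of "-1"]] by simp
qed

lemma Dm_diff: "smooth_fun f \<Longrightarrow> smooth_fun g \<Longrightarrow> Dm \<alpha> (\<lambda>y. f y - g y) = (\<lambda>y. Dm \<alpha> f y - Dm \<alpha> g y)"
proof -
  assume f: "smooth_fun f" and g: "smooth_fun g"
  have "(\<lambda>y. f y - g y) = (\<lambda>y. f y + (-1) * g y)" by simp
  then show ?thesis using Dm_add[OF f smooth_cmul[OF g], of \<alpha> "-1"] Dm_cmul[OF g, of \<alpha> "-1"] by simp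
qed

lemma sp_diff: "sp f \<Longrightarrow> sp g \<Longrightarrow> sp (\<lambda>x. f x - g x)"
  unfolding sp_def periodic_torus_def by (auto intro: smooth_diff)

lemma unif_lim:
  fixes \<phi> :: "nat \<Rightarrow> 'a \<Rightarrow> complex"
  assumes C: "\<And>\<epsilon>. \<epsilon> > 0 \<Longrightarrow> \<exists>N. \<forall>n\<ge>N. \<forall>n'\<ge>N. \<forall>x. norm (\<phi> n x - \<phi> n' x) \<le> \<epsilon>"
  shows "(\<lambda>k. \<phi> k x) \<longlonglongrightarrow> lim (\<lambda>k. \<phi> k x)"
    and "\<epsilon> > 0 \<Longrightarrow> \<exists>N. \<forall>n\<ge>N. \<forall>x. norm (\<phi> n x - lim (\<lambda>k. \<phi> k x)) \<le> \<epsilon>"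
proof -
  have conv: "(\<lambda>k. \<phi> k x) \<longlonglongrightarrow> lim (\<lambda>k. \<phi> k x)" for x
  proof -
    have "Cauchy (\<lambda>k. \<phi> k x)"
    proof (rule CauchyI)
      fix e :: real assume "0 < e"
      then obtain N where "\<forall>n\<ge>N. \<forall>n'\<ge>N. \<forall>x. norm (\<phi> n x - \<phi> n' x) \<le> e/2" using C[of "e/2"] by auto
      then have N: "\<And>m n. m \<ge> N \<Longrightarrow> n \<ge> N \<Longrightarrow> norm (\<phi> m x - \<phi> n x) \<le> e/2" by blast
      show "\<exists>M. \<forall>m\<ge>M. \<forall>n\<ge>M. norm (\<phi> m x - \<phi> n x) < e"
      proof (intro exI allI impI)
        fix m n assume "N \<le> m" "N \<le> n"
        then show "norm (\<phi> m x - \<phi> n x) < e" using N[of m n] \<open>0 < e\<close> by linarith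
      qed
    qed
    then show ?thesis by (simp add: Cauchy_convergent_iff convergent_LIMSEQ_iff)
  qed
  then show "(\<lambda>k. \<phi> k x) \<longlonglongrightarrow> lim (\<lambda>k. \<phi> k x)" .
  assume "\<epsilon> > 0"
  then obtain N where N: "\<And>n n' x. n \<ge> N \<Longrightarrow> n' \<ge> N \<Longrightarrow> norm (\<phi> n x - \<phi> n' x) \<le> \<epsilon>" using C by blast
  have "norm (\<phi> n x - lim (\<lambda>k. \<phi> k x)) \<le> \<epsilon>" if "n \<ge> N" for n x
  proof (rule LIMSEQ_le_const2)
    show "(\<lambda>k. norm (\<phi> n x - \<phi> k x)) \<longlonglongrightarrow> norm (\<phi> n x - lim (\<lambda>k. \<phi> k x))"
      by (intro tendsto_intros conv)
    show "\<exists>M. \<forall>k\<ge>M. norm (\<phi> n x - \<phi> k x) \<le> \<epsilon>" using N that by blast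
  qed
  then show "\<exists>N. \<forall>n\<ge>N. \<forall>x. norm (\<phi> n x - lim (\<lambda>k. \<phi> k x)) \<le> \<epsilon>" by blast
qed

lemma Eh_complete:
  fixes F :: "nat \<Rightarrow> real^'n::finite \<Rightarrow> complex"
  assumes F: "\<And>n. F n \<in> Eh \<omega> h"
    and C: "\<And>\<epsilon>. \<epsilon> > 0 \<Longrightarrow> \<exists>N. \<forall>n\<ge>N. \<forall>n'\<ge>N. wn \<omega> (1/h) (\<lambda>x. F n x - F n' x) < \<epsilon>"
  shows "\<exists>f \<in> Eh \<omega> h. \<forall>\<epsilon>>0. \<exists>N. \<forall>n\<ge>N. (\<lambda>x. F n x - f x) \<in> Eh \<omega> h \<and> wn \<omega> (1/h) (\<lambda>x. F n x - f x) \<le> \<epsilon>"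
proof -
  have sF: "sp (F n)" for n using F unfolding Eh_iff by auto
  have smF: "smooth_fun (F n)" for n using sF unfolding sp_def by auto
  have Fd: "(\<lambda>x. F n x - F n' x) \<in> Eh \<omega> h" for n n' by (rule wn_diff(1)[OF F F])
  have Dd: "cmod (Dm \<alpha> (F n) x - Dm \<alpha> (F n') x) * rho \<omega> (1/h) \<alpha> \<le> wn \<omega> (1/h) (\<lambda>x. F n x - F n' x)" for \<alpha> n n' x
  proof -
    have "Dm \<alpha> (F n) x - Dm \<alpha> (F n') x = Dm \<alpha> (\<lambda>x. F n x - F n' x) x" by (simp add: Dm_diff smF)
    then show ?thesis using wn_ge[of \<omega> "1/h" "\<lambda>x. F n x - F n' x" \<alpha> x] Fd[of n n'] unfolding Eh_iff by simp
  qed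
  have CD: "\<exists>N. \<forall>n\<ge>N. \<forall>n'\<ge>N. \<forall>x. norm (pdl xs (F n) x - pdl xs (F n') x) \<le> \<epsilon>" if e: "\<epsilon> > 0" for xs \<epsilon>
  proof -
    define \<beta> where "\<beta> = (\<lambda>i. count_list xs i)"
    define r where "r = rho \<omega> (1/h) \<beta>"
    have r: "r > 0" unfolding r_def by (rule rho_pos)
    obtain N where N: "\<And>n n'. n \<ge> N \<Longrightarrow> n' \<ge> N \<Longrightarrow> wn \<omega> (1/h) (\<lambda>x. F n x - F n' x) < \<epsilon> * r"
      using C[of "\<epsilon> * r"] e r by auto
    have "norm (pdl xs (F n) x - pdl xs (F n') x) \<le> \<epsilon>" if "n \<ge> N" "n' \<ge> N" for n n' x
    proof -
      have "norm (pdl xs (F n) x - pdl xs (F n') x) * r < \<epsilon> * r"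
        using Dd[of \<beta> n x n'] N[OF that] unfolding r_def \<beta>_def by (simp add: pdl_Dm[OF smF])
      then show ?thesis using r by simp
    qed
    then show ?thesis by blast
  qed
  define G where "G xs x = lim (\<lambda>k. pdl xs (F k) x)" for xs x
  have conv: "(\<lambda>k. pdl xs (F k) x) \<longlonglongrightarrow> G xs x" for xs x
    unfolding G_def by (rule unif_lim(1)) (rule CD)
  have unif: "\<exists>N. \<forall>n\<ge>N. \<forall>x. norm (pdl xs (F n) x - G xs x) \<le> \<epsilon>" if "\<epsilon> > 0" for xs \<epsilon>
    unfolding G_def by (rule unif_lim(2)) (use CD that in auto)
  have contG: "continuous_on UNIV (G xs)" for xs
  proof (rule uniform_limit_theorem)
    show "\<forall>\<^sub>F n in sequentially. continuous_on UNIV (pdl xs (F n))"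
      using smooth_cont[OF smooth_pdl[OF smF]] by simp
    show "uniform_limit UNIV (\<lambda>n. pdl xs (F n)) (G xs) sequentially"
      unfolding uniform_limit_sequentially_iff
    proof (intro allI impI)
      fix e :: real assume "e > 0"
      then obtain N where "\<forall>n\<ge>N. \<forall>x. norm (pdl xs (F n) x - G xs x) \<le> e/2" using unif[of "e/2" xs] by auto
      then show "\<exists>N. \<forall>n\<ge>N. \<forall>x\<in>UNIV. dist (pdl xs (F n) x) (G xs x) < e"
      proof (intro exI allI impI ballI)
        fix n x assume "N \<le> n"
        then have "norm (pdl xs (F n) x - G xs x) \<le> e/2" using \<open>\<forall>n\<ge>N. \<forall>x. _\<close> by blast
        then show "dist (pdl xs (F n) x) (G xs x) < e" using \<open>e > 0\<close> unfolding dist_norm by linarith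
      qed
    qed
  qed auto
  have derG: "((\<lambda>t. G xs (x + t *\<^sub>R axis i 1)) has_vector_derivative G (i # xs) x) (at 0)" for xs i x
  proof -
    have "\<exists>g. \<forall>t\<in>UNIV. (\<lambda>n. pdl xs (F n) (x + t *\<^sub>R axis i 1)) \<longlonglongrightarrow> g t \<and>
            (g has_derivative (\<lambda>s. s *\<^sub>R G (i # xs) (x + t *\<^sub>R axis i 1))) (at t within UNIV)"
    proof (rule has_derivative_sequence[where f'="\<lambda>n t s. s *\<^sub>R pdl (i # xs) (F n) (x + t *\<^sub>R axis i 1)"])
      show "convex (UNIV :: real set)" by simp
      fix n and t :: real
      have "((\<lambda>t. pdl xs (F n) (x + t *\<^sub>R axis i 1)) has_vector_derivative pd i (pdl xs (F n)) (x + t *\<^sub>R axis i 1)) (at t)"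
        by (rule dif_hvd_at) (use smF smooth_iff in blast)
      then show "((\<lambda>t. pdl xs (F n) (x + t *\<^sub>R axis i 1)) has_derivative (\<lambda>s. s *\<^sub>R pdl (i # xs) (F n) (x + t *\<^sub>R axis i 1))) (at t within UNIV)"
        by (simp add: has_vector_derivative_def)
    next
      fix e :: real assume "e > 0"
      then obtain N where N: "\<forall>n\<ge>N. \<forall>x. norm (pdl (i # xs) (F n) x - G (i # xs) x) \<le> e" using unif by blast
      have "\<forall>t\<in>UNIV. \<forall>s. norm (s *\<^sub>R pdl (i # xs) (F n) (x + t *\<^sub>R axis i 1) - s *\<^sub>R G (i # xs) (x + t *\<^sub>R axis i 1)) \<le> e * norm s"
        if "n \<ge> N" for n
      proof (intro ballI allI)
        fix t s :: real
        have "norm (s *\<^sub>R pdl (i # xs) (F n) (x + t *\<^sub>R axis i 1) - s *\<^sub>R G (i # xs) (x + t *\<^sub>R axis i 1))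
              = \<bar>s\<bar> * norm (pdl (i # xs) (F n) (x + t *\<^sub>R axis i 1) - G (i # xs) (x + t *\<^sub>R axis i 1))"
          by (simp add: scaleR_diff_right[symmetric])
        also have "\<dots> \<le> \<bar>s\<bar> * e" using N that by (intro mult_left_mono) auto
        finally show "norm (s *\<^sub>R pdl (i # xs) (F n) (x + t *\<^sub>R axis i 1) - s *\<^sub>R G (i # xs) (x + t *\<^sub>R axis i 1)) \<le> e * norm s"
          by (simp add: mult.commute)
      qed
      then show "\<forall>\<^sub>F n in sequentially. \<forall>t\<in>UNIV. \<forall>s. norm (s *\<^sub>R pdl (i # xs) (F n) (x + t *\<^sub>R axis i 1) - s *\<^sub>R G (i # xs) (x + t *\<^sub>R axis i 1)) \<le> e * norm s"
        unfolding eventually_sequentially by blast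
    next
      show "(0::real) \<in> UNIV" by simp
      show "(\<lambda>n. pdl xs (F n) (x + 0 *\<^sub>R axis i 1)) \<longlonglongrightarrow> G xs x" using conv by simp
    qed
    then obtain g where g: "\<And>t. (\<lambda>n. pdl xs (F n) (x + t *\<^sub>R axis i 1)) \<longlonglongrightarrow> g t"
        "\<And>t. (g has_derivative (\<lambda>s. s *\<^sub>R G (i # xs) (x + t *\<^sub>R axis i 1))) (at t)"
      by auto
    have "g = (\<lambda>t. G xs (x + t *\<^sub>R axis i 1))"
    proof
      fix t show "g t = G xs (x + t *\<^sub>R axis i 1)" using LIMSEQ_unique[OF g(1) conv] .
    qed
    then show ?thesis using g(2)[of 0] by (simp add: has_vector_derivative_def)
  qed
  have pdG: "pd i (G xs) = G (i # xs)" for i xs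
    unfolding pd_def by (rule ext, rule vector_derivative_at[OF derG])
  have pdlG: "pdl xs (G []) = G xs" for xs
    by (induction xs) (simp_all add: pdG)
  define f where "f = G []"
  have smf: "smooth_fun f"
    unfolding smooth_iff f_def pdlG dif_def pdG using contG derG by blast
  have perf: "periodic_torus f"
    unfolding periodic_torus_def f_def G_def using sF unfolding sp_def periodic_torus_def by simp
  have approx: "\<exists>N. \<forall>n\<ge>N. (\<lambda>x. F n x - f x) \<in> Eh \<omega> h \<and> wn \<omega> (1/h) (\<lambda>x. F n x - f x) \<le> \<epsilon>" if e: "\<epsilon> > 0" for \<epsilon>
  proof -
    obtain N where N: "\<And>n n'. n \<ge> N \<Longrightarrow> n' \<ge> N \<Longrightarrow> wn \<omega> (1/h) (\<lambda>x. F n x - F n' x) < \<epsilon>"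
      using C[OF e] by auto
    have b: "cmod (Dm \<alpha> (\<lambda>x. F n x - f x) x) * rho \<omega> (1/h) \<alpha> \<le> \<epsilon>" if n: "n \<ge> N" for n \<alpha> x
    proof -
      have eq: "Dm \<alpha> (\<lambda>x. F n x - f x) x = pdl (canon \<alpha>) (F n) x - G (canon \<alpha>) x"
        using Dm_diff[OF smF smf] unfolding Dm_canon f_def pdlG by simp
      show ?thesis unfolding eq
      proof (rule LIMSEQ_le_const2)
        show "(\<lambda>k. cmod (pdl (canon \<alpha>) (F n) x - pdl (canon \<alpha>) (F k) x) * rho \<omega> (1/h) \<alpha>) \<longlonglongrightarrow> cmod (pdl (canon \<alpha>) (F n) x - G (canon \<alpha>) x) * rho \<omega> (1/h) \<alpha>"
          by (intro tendsto_intros conv)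
        have "cmod (pdl (canon \<alpha>) (F n) x - pdl (canon \<alpha>) (F k) x) * rho \<omega> (1/h) \<alpha> \<le> \<epsilon>" if "k \<ge> N" for k
          using Dd[of \<alpha> n x k] N[OF n that] unfolding Dm_canon by simp
        then show "\<exists>M. \<forall>k\<ge>M. cmod (pdl (canon \<alpha>) (F n) x - pdl (canon \<alpha>) (F k) x) * rho \<omega> (1/h) \<alpha> \<le> \<epsilon>" by blast
      qed
    qed
    have "(\<lambda>x. F n x - f x) \<in> Eh \<omega> h \<and> wn \<omega> (1/h) (\<lambda>x. F n x - f x) \<le> \<epsilon>" if "n \<ge> N" for n
      using wn_le[OF b[OF that]] sp_diff[OF sF, of f n] smf perf unfolding Eh_iff sp_def by auto
    then show ?thesis by blast
  qed
  have fE: "f \<in> Eh \<omega> h"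
  proof -
    obtain N where "(\<lambda>x. F N x - f x) \<in> Eh \<omega> h" using approx[of 1] by auto
    from wn_diff(1)[OF F[of N] this] show ?thesis by simp
  qed
  show ?thesis using fE approx by blast
qed



definition dP :: "(real^'n::finite \<Rightarrow> complex) set \<Rightarrow> (real \<Rightarrow> real) \<Rightarrow> real \<Rightarrow> (real^'n \<Rightarrow> complex) \<Rightarrow> (real^'n \<Rightarrow> complex) \<Rightarrow> real" where
  "dP P \<omega> h f g = (if f \<in> P \<and> g \<in> P then wn \<omega> (1/h) (\<lambda>x. f x - g x) else 0)"

lemma wn_swap:
  assumes f: "f \<in> Eh \<omega> h" and g: "g \<in> Eh \<omega> h"
  shows "wn \<omega> (1/h) (\<lambda>x. f x - g x) = wn \<omega> (1/h) (\<lambda>x. g x - f x)"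
proof -
  have le: "wn \<omega> (1/h) (\<lambda>x. q x - p x) \<le> wn \<omega> (1/h) (\<lambda>x. p x - q x)" if "p \<in> Eh \<omega> h" "q \<in> Eh \<omega> h" for p q
  proof -
    have "(\<lambda>x. q x - p x) = (\<lambda>x. (-1) * (p x - q x))" by simp
    then show ?thesis using wn_cmul(2)[OF wn_diff(1)[OF that], of "-1"] by simp
  qed
  show ?thesis using le[OF f g] le[OF g f] by linarith
qed

lemma metric_P:
  assumes P: "P \<subseteq> Eh \<omega> h"
  shows "Metric_space P (dP P \<omega> h)"
proof
  fix x y z
  show "0 \<le> dP P \<omega> h x y" unfolding dP_def by (simp add: wn_nonneg)
  show "dP P \<omega> h x y = dP P \<omega> h y x"
  proof (cases "x \<in> P \<and> y \<in> P")
    case True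
    then have "x \<in> Eh \<omega> h" "y \<in> Eh \<omega> h" using P by auto
    then show ?thesis unfolding dP_def using True wn_swap by auto
  next
    case False then show ?thesis unfolding dP_def by auto
  qed
  assume x: "x \<in> P" and y: "y \<in> P"
  show "dP P \<omega> h x y = 0 \<longleftrightarrow> x = y"
  proof
    assume "dP P \<omega> h x y = 0"
    then have "wn \<omega> (1/h) (\<lambda>t. x t - y t) = 0" using x y unfolding dP_def by simp
    then have "x t - y t = 0" for t using wn_eq0[OF wn_diff(1)] x y P by blast
    then show "x = y" by auto
  next
    assume "x = y" then show "dP P \<omega> h x y = 0" using x unfolding dP_def by (simp add: wn_zero)
  qed
  assume z: "z \<in> P"
  have xE: "x \<in> Eh \<omega> h" and yE: "y \<in> Eh \<omega> h" and zE: "z \<in> Eh \<omega> h" using x y z P by auto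
  have eq: "(\<lambda>t. x t - z t) = (\<lambda>t. (x t - y t) + (y t - z t))" by simp
  have "wn \<omega> (1/h) (\<lambda>t. x t - z t) \<le> wn \<omega> (1/h) (\<lambda>t. x t - y t) + wn \<omega> (1/h) (\<lambda>t. y t - z t)"
    unfolding eq by (rule wn_add(2)[OF wn_diff(1)[OF xE yE] wn_diff(1)[OF yE zE]])
  then show "dP P \<omega> h x z \<le> dP P \<omega> h x y + dP P \<omega> h y z"
    using x y z unfolding dP_def by simp
qed

lemma Eh_Eom: "h > 0 \<Longrightarrow> Eh \<omega> h \<subseteq> Eom \<omega>"
  unfolding Eom_def by auto

lemma dual_add: "\<mu> \<in> dual \<omega> \<Longrightarrow> f \<in> Eom \<omega> \<Longrightarrow> g \<in> Eom \<omega> \<Longrightarrow> \<mu> (\<lambda>x. f x + g x) = \<mu> f + \<mu> g"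
  unfolding dual_def by blast
lemma dual_cmul: "\<mu> \<in> dual \<omega> \<Longrightarrow> f \<in> Eom \<omega> \<Longrightarrow> \<mu> (\<lambda>x. c * f x) = c * \<mu> f"
  unfolding dual_def by blast
lemma dual_bound:
  assumes "\<mu> \<in> dual \<omega>" "h > 0"
  shows "\<exists>C. \<forall>f\<in>Eh \<omega> h. cmod (\<mu> f) \<le> C * wn \<omega> (1/h) f"
proof -
  obtain C where C: "\<forall>f\<in>Eh \<omega> h. ereal (cmod (\<mu> f)) \<le> ereal C * wnorm \<omega> (1/h) f"
    using assms unfolding dual_def by blast
  have "cmod (\<mu> f) \<le> C * wn \<omega> (1/h) f" if "f \<in> Eh \<omega> h" for f
  proof -
    have "wnorm \<omega> (1/h) f = ereal (wn \<omega> (1/h) f)" using that fin_wnorm unfolding Eh_iff by blast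
    have "ereal (cmod (\<mu> f)) \<le> ereal C * wnorm \<omega> (1/h) f" using C that by blast
    also have "\<dots> = ereal (C * wn \<omega> (1/h) f)" using \<open>wnorm \<omega> (1/h) f = _\<close> by simp
    finally show ?thesis by simp
  qed
  then show ?thesis by blast
qed

lemma P_props:
  fixes a :: "('n::finite \<Rightarrow> nat) \<Rightarrow> real^'n \<Rightarrow> complex"
  assumes h: "h > 0" and PD: "P = polar_ker_tL \<omega> m a \<inter> Eh \<omega> h"
  shows "\<And>f g. f \<in> P \<Longrightarrow> g \<in> P \<Longrightarrow> (\<lambda>x. f x + g x) \<in> P"
    and "\<And>f c. f \<in> P \<Longrightarrow> (\<lambda>x. c * f x) \<in> P"
    and "(\<lambda>x. 0) \<in> P"
    and "P \<subseteq> Eh \<omega> h"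
proof -
  have ker: "\<mu> \<in> dual \<omega>" if "\<mu> \<in> ker_tL \<omega> m a" for \<mu> using that unfolding ker_tL_def by auto
  show "(\<lambda>x. f x + g x) \<in> P" if "f \<in> P" "g \<in> P" for f g
  proof -
    have fg: "f \<in> Eh \<omega> h" "g \<in> Eh \<omega> h" "f \<in> Eom \<omega>" "g \<in> Eom \<omega>" "\<forall>\<mu>\<in>ker_tL \<omega> m a. \<mu> f = 0 \<and> \<mu> g = 0"
      using that unfolding PD polar_ker_tL_def by auto
    have "(\<lambda>x. f x + g x) \<in> Eh \<omega> h" by (rule wn_add(1)[OF fg(1,2)])
    then show ?thesis unfolding PD polar_ker_tL_def using Eh_Eom[OF h] fg ker dual_add by fastforce
  qed
  show "(\<lambda>x. c * f x) \<in> P" if "f \<in> P" for f c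
  proof -
    have fg: "f \<in> Eh \<omega> h" "f \<in> Eom \<omega>" "\<forall>\<mu>\<in>ker_tL \<omega> m a. \<mu> f = 0"
      using that unfolding PD polar_ker_tL_def by auto
    have "(\<lambda>x. c * f x) \<in> Eh \<omega> h" by (rule wn_cmul(1)[OF fg(1)])
    then show ?thesis unfolding PD polar_ker_tL_def using Eh_Eom[OF h] fg ker dual_cmul by fastforce
  qed
  show "(\<lambda>x. 0) \<in> P"
  proof -
    have z: "(\<lambda>x::real^'n. 0) \<in> Eh \<omega> h" by (rule Eh_zero)
    have "\<mu> (\<lambda>x. 0) = 0" if "\<mu> \<in> ker_tL \<omega> m a" for \<mu>
      using dual_cmul[OF ker[OF that] subsetD[OF Eh_Eom[OF h] z], of 0] by simp
    then show ?thesis unfolding PD polar_ker_tL_def using z Eh_Eom[OF h] by auto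
  qed
  show "P \<subseteq> Eh \<omega> h" unfolding PD by auto
qed

lemma P_complete:
  fixes a :: "('n::finite \<Rightarrow> nat) \<Rightarrow> real^'n \<Rightarrow> complex"
  assumes h: "h > 0" and PD: "P = polar_ker_tL \<omega> m a \<inter> Eh \<omega> h"
  shows "Metric_space.mcomplete P (dP P \<omega> h)"
proof -
  have PE: "P \<subseteq> Eh \<omega> h" using P_props[OF h PD] by blast
  interpret Metric_space P "dP P \<omega> h" by (rule metric_P[OF PE])
  show ?thesis unfolding mcomplete_def
  proof (intro allI impI)
    fix \<sigma> assume "MCauchy \<sigma>"
    then have sP: "\<And>n. \<sigma> n \<in> P" and C: "\<And>\<epsilon>. \<epsilon> > 0 \<Longrightarrow> \<exists>N. \<forall>n n'. N \<le> n \<longrightarrow> N \<le> n' \<longrightarrow> dP P \<omega> h (\<sigma> n) (\<sigma> n') < \<epsilon>"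
      unfolding MCauchy_def by auto
    have sE: "\<sigma> n \<in> Eh \<omega> h" for n using sP PE by auto
    have C': "\<exists>N. \<forall>n\<ge>N. \<forall>n'\<ge>N. wn \<omega> (1/h) (\<lambda>x. \<sigma> n x - \<sigma> n' x) < \<epsilon>" if "\<epsilon> > 0" for \<epsilon>
      using C[OF that] sP unfolding dP_def by auto
    obtain f where fE: "f \<in> Eh \<omega> h" and app: "\<And>\<epsilon>. \<epsilon> > 0 \<Longrightarrow> \<exists>N. \<forall>n\<ge>N. (\<lambda>x. \<sigma> n x - f x) \<in> Eh \<omega> h \<and> wn \<omega> (1/h) (\<lambda>x. \<sigma> n x - f x) \<le> \<epsilon>"
      using Eh_complete[OF sE C'] by blast
    have fP: "f \<in> P"
    proof -
      have "\<mu> f = 0" if \<mu>: "\<mu> \<in> ker_tL \<omega> m a" for \<mu>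
      proof -
        have \<mu>d: "\<mu> \<in> dual \<omega>" using \<mu> unfolding ker_tL_def by auto
        obtain B where B: "\<And>g. g \<in> Eh \<omega> h \<Longrightarrow> cmod (\<mu> g) \<le> B * wn \<omega> (1/h) g"
          using dual_bound[OF \<mu>d h] by blast
        have "cmod (\<mu> f) \<le> (\<bar>B\<bar> + 1) * \<epsilon>" if e: "\<epsilon> > 0" for \<epsilon>
        proof -
          obtain N where N: "(\<lambda>x. \<sigma> N x - f x) \<in> Eh \<omega> h" "wn \<omega> (1/h) (\<lambda>x. \<sigma> N x - f x) \<le> \<epsilon>"
            using app[OF e] by blast
          have s0: "\<mu> (\<sigma> N) = 0" using sP[of N] \<mu> unfolding PD polar_ker_tL_def by auto
          have m1: "(\<lambda>x. (-1) * (\<sigma> N x - f x)) \<in> Eom \<omega>" using wn_cmul(1)[OF N(1)] Eh_Eom[OF h] by blast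
          have "f = (\<lambda>x. \<sigma> N x + (-1) * (\<sigma> N x - f x))" by simp
          then have "\<mu> f = \<mu> (\<sigma> N) + \<mu> (\<lambda>x. (-1) * (\<sigma> N x - f x))"
            using dual_add[OF \<mu>d _ m1, of "\<sigma> N"] sE[of N] Eh_Eom[OF h] by auto
          also have "\<dots> = - \<mu> (\<lambda>x. \<sigma> N x - f x)"
            using s0 dual_cmul[OF \<mu>d, of "\<lambda>x. \<sigma> N x - f x" "-1"] N(1) Eh_Eom[OF h] by auto
          finally have "cmod (\<mu> f) = cmod (\<mu> (\<lambda>x. \<sigma> N x - f x))" by simp
          also have "\<dots> \<le> B * wn \<omega> (1/h) (\<lambda>x. \<sigma> N x - f x)" by (rule B[OF N(1)])
          also have "\<dots> \<le> \<bar>B\<bar> * wn \<omega> (1/h) (\<lambda>x. \<sigma> N x - f x)"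
            using wn_nonneg by (intro mult_right_mono) auto
          also have "\<dots> \<le> (\<bar>B\<bar> + 1) * \<epsilon>" using N(2) wn_nonneg[of \<omega> "1/h" "\<lambda>x. \<sigma> N x - f x"]
            by (intro mult_mono) auto
          finally show ?thesis .
        qed
        then have "cmod (\<mu> f) \<le> 0"
        proof -
          assume *: "\<And>\<epsilon>. \<epsilon> > 0 \<Longrightarrow> cmod (\<mu> f) \<le> (\<bar>B\<bar> + 1) * \<epsilon>"
          show ?thesis
          proof (rule ccontr)
            assume "\<not> cmod (\<mu> f) \<le> 0"
            then have p: "cmod (\<mu> f) > 0" by simp
            have "cmod (\<mu> f) \<le> (\<bar>B\<bar> + 1) * (cmod (\<mu> f) / (2 * (\<bar>B\<bar> + 1)))"
              using *[of "cmod (\<mu> f) / (2 * (\<bar>B\<bar> + 1))"] p by (simp add: add_pos_nonneg)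
            also have "\<dots> = cmod (\<mu> f) / 2"
            proof -
              have nz: "\<bar>B\<bar> + 1 \<noteq> 0" using abs_ge_zero[of B] by linarith
              then show ?thesis by (simp add: field_simps)
            qed
            finally show False using p by simp
          qed
        qed
        then show ?thesis by simp
      qed
      then show ?thesis unfolding PD polar_ker_tL_def using fE Eh_Eom[OF h] by auto
    qed
    have "limitin mtopology \<sigma> f sequentially"
      unfolding limit_metric_sequentially
    proof (intro conjI fP allI impI)
      fix \<epsilon> :: real assume e: "\<epsilon> > 0"
      obtain N where N: "\<forall>n\<ge>N. (\<lambda>x. \<sigma> n x - f x) \<in> Eh \<omega> h \<and> wn \<omega> (1/h) (\<lambda>x. \<sigma> n x - f x) \<le> \<epsilon>/2"
        using app[of "\<epsilon>/2"] e by auto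
      show "\<exists>N. \<forall>n\<ge>N. \<sigma> n \<in> P \<and> dP P \<omega> h (\<sigma> n) f < \<epsilon>"
      proof (intro exI allI impI conjI)
        fix n assume "N \<le> n"
        show "\<sigma> n \<in> P" by (rule sP)
        show "dP P \<omega> h (\<sigma> n) f < \<epsilon>" using N \<open>N \<le> n\<close> sP[of n] fP e unfolding dP_def by fastforce
      qed
    qed
    then show "\<exists>x. limitin mtopology \<sigma> x sequentially" by blast
  qed
qed



lemma int_bound:
  fixes \<phi> :: "real^'n::finite \<Rightarrow> complex"
  assumes c: "continuous_on UNIV \<phi>" and b: "\<And>y. cmod (\<phi> y) \<le> B"
  shows "cmod (torus_integral \<phi>) \<le> B * measure lborel (cbox 0 (\<chi> j. 2*pi) :: (real^'n) set)"
proof -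
  have B: "0 \<le> B" using b[of 0] norm_ge_zero order_trans by blast
  have "(\<phi> has_integral torus_integral \<phi>) (cbox 0 (\<chi> j. 2*pi))"
    unfolding torus_integral_def by (rule integrable_integral[OF cont_int[OF c]])
  from has_integral_bound[OF B this] b show ?thesis by simp
qed

lemma Eh_bdd:
  fixes f :: "real^'n::finite \<Rightarrow> complex"
  shows "f \<in> Eh \<omega> h \<Longrightarrow> cmod (f y) \<le> wn \<omega> (1/h) f / rho \<omega> (1/h) (\<lambda>i::'n. 0)"
  by (rule sup_le) (simp add: Eh_iff)

lemma Eom_bdd:
  fixes v :: "real^'n::finite \<Rightarrow> complex"
  assumes "v \<in> Eom \<omega>"
  shows "sp v" "\<exists>B\<ge>0. \<forall>y. cmod (v y) \<le> B"
proof -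
  obtain h' where h': "h' > 0" "v \<in> Eh \<omega> h'" using assms unfolding Eom_def by auto
  show "sp v" using h' unfolding Eh_iff by auto
  have "0 \<le> wn \<omega> (1/h') v / rho \<omega> (1/h') (\<lambda>i::'n. 0)"
    using wn_nonneg rho_pos by (intro divide_nonneg_pos) auto
  then show "\<exists>B\<ge>0. \<forall>y. cmod (v y) \<le> B" using Eh_bdd[OF h'(2)] by blast
qed



theorem lemma3p2:
  fixes \<omega> :: "real \<Rightarrow> real"
    and m :: nat
    and a :: "('n::finite \<Rightarrow> nat) \<Rightarrow> real^'n \<Rightarrow> complex"
  assumes "weight_function \<omega>"
    and "\<And>\<alpha>. mlen \<alpha> \<le> m \<Longrightarrow> a \<alpha> \<in> Eom \<omega>"
    and "globally_solvable \<omega> m a"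
  shows "\<forall>h>0. \<forall>k>0. \<exists>C>0. \<forall>f v.
           f \<in> polar_ker_tL \<omega> m a \<and> f \<in> Eh \<omega> h \<and> v \<in> Eom \<omega> \<and> tLop m a v \<in> Eh \<omega> k \<longrightarrow>
           ereal (cmod (torus_integral (\<lambda>x. f x * v x)))
             \<le> ereal C * wnorm \<omega> (1/h) f * wnorm \<omega> (1/k) (tLop m a v)"
proof (intro allI impI)
  fix h k :: real assume h: "h > 0" and k: "k > 0"
  define P where "P = polar_ker_tL \<omega> m a \<inter> Eh \<omega> h"
  note Pp = P_props[OF h P_def]
  interpret Metric_space P "dP P \<omega> h" by (rule metric_P[OF Pp(4)])
  have mc: mcomplete by (rule P_complete[OF h P_def])
  define vol where "vol = measure lborel (cbox 0 (\<chi> j. 2*pi) :: (real^'n) set)"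
  have vol: "0 \<le> vol" unfolding vol_def by simp
  define \<rho>h where "\<rho>h = rho \<omega> (1/h) (\<lambda>i::'n. 0)"
  define \<rho>k where "\<rho>k = rho \<omega> (1/k) (\<lambda>i::'n. 0)"
  have \<rho>h: "\<rho>h > 0" and \<rho>k: "\<rho>k > 0" unfolding \<rho>h_def \<rho>k_def by (simp_all add: rho_pos)
  have sa: "sp (a \<alpha>)" if "mlen \<alpha> \<le> m" for \<alpha> using Eom_bdd(1)[OF assms(2)[OF that]] .
  define V where "V = {v. v \<in> Eom \<omega> \<and> tLop m a v \<in> Eh \<omega> k}"
  define Nv where "Nv v = wn \<omega> (1/k) (tLop m a v)" for v
  have Nv0: "0 \<le> Nv v" for v unfolding Nv_def by (rule wn_nonneg)
  have tLb: "cmod (tLop m a v y) \<le> Nv v / \<rho>k" if "v \<in> V" for v y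
    using Eh_bdd[of "tLop m a v" \<omega> k y] that unfolding V_def Nv_def \<rho>k_def by auto
  define A where "A n = {f \<in> P. \<forall>v\<in>V. cmod (torus_integral (\<lambda>x. f x * v x)) \<le> real n * Nv v}" for n :: nat
  have AP: "A n \<subseteq> P" for n unfolding A_def by auto
  have PE: "f \<in> Eh \<omega> h" if "f \<in> P" for f using that Pp(4) by auto
  have spP: "sp f" if "f \<in> P" for f using PE[OF that] unfolding Eh_iff by auto
  have cover: "\<Union>(range A) = P"
  proof
    show "\<Union>(range A) \<subseteq> P" using AP by auto
    show "P \<subseteq> \<Union>(range A)"
    proof
      fix f assume fP: "f \<in> P"
      then have "f \<in> Lop m a ` Eom \<omega>"
        using assms(3) unfolding globally_solvable_def P_def by auto
      then obtain u where u: "u \<in> Eom \<omega>" "f = Lop m a u" by auto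
      obtain Bu where Bu: "Bu \<ge> 0" "\<And>y. cmod (u y) \<le> Bu" using Eom_bdd(2)[OF u(1)] by auto
      define n where "n = nat \<lceil>Bu * vol / \<rho>k\<rceil>"
      have "cmod (torus_integral (\<lambda>x. f x * v x)) \<le> real n * Nv v" if v: "v \<in> V" for v
      proof -
        have spv: "sp v" using v unfolding V_def using Eom_bdd(1) by auto
        have "torus_integral (\<lambda>x. f x * v x) = torus_integral (\<lambda>x. u x * tLop m a v x)"
          unfolding u(2) by (rule ibp_L[OF Eom_bdd(1)[OF u(1)] spv sa])
        also have "cmod \<dots> \<le> (Bu * (Nv v / \<rho>k)) * vol"
          unfolding vol_def
        proof (rule int_bound)
          have "sp (tLop m a v)" using v unfolding V_def Eh_iff by auto
          then show "continuous_on UNIV (\<lambda>x. u x * tLop m a v x)"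
            using Eom_bdd(1)[OF u(1)] by (intro sp_cont sp_mult)
          fix y show "cmod (u y * tLop m a v y) \<le> Bu * (Nv v / \<rho>k)"
            unfolding norm_mult using Bu tLb[OF v] by (intro mult_mono) auto
        qed
        also have "\<dots> = (Bu * vol / \<rho>k) * Nv v" by simp
        also have "\<dots> \<le> real n * Nv v"
          unfolding n_def by (intro mult_right_mono Nv0) linarith
        finally show ?thesis .
      qed
      then have "f \<in> A n" unfolding A_def using fP by auto
      then show "f \<in> \<Union>(range A)" by auto
    qed
  qed
  have closed: "closedin mtopology (A n)" for n
    unfolding closedin_metric
  proof (intro conjI AP allI impI)
    fix x assume "x \<in> P - A n"
    then have xP: "x \<in> P" and "x \<notin> A n" by auto
    then obtain v where v: "v \<in> V" and big: "cmod (torus_integral (\<lambda>y. x y * v y)) > real n * Nv v"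
      unfolding A_def by auto
    have spv: "sp v" using v unfolding V_def using Eom_bdd(1) by auto
    obtain Bv where Bv: "Bv \<ge> 0" "\<And>y. cmod (v y) \<le> Bv" using v unfolding V_def using Eom_bdd(2) by blast
    define \<delta> where "\<delta> = cmod (torus_integral (\<lambda>y. x y * v y)) - real n * Nv v"
    have \<delta>: "\<delta> > 0" unfolding \<delta>_def using big by simp
    define c where "c = Bv / \<rho>h * vol"
    have c: "c \<ge> 0" unfolding c_def using Bv \<rho>h vol by simp
    define r where "r = \<delta> / (c + 1)"
    have r: "r > 0" unfolding r_def using \<delta> c by simp
    have rc: "r * c < \<delta>"
    proof -
      have "r * c = \<delta> * (c / (c + 1))" unfolding r_def by simp
      also have "\<dots> < \<delta> * 1" using \<delta> c by (intro mult_strict_left_mono) auto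
      finally show ?thesis by simp
    qed
    have "disjnt (A n) (mball x r)"
      unfolding disjnt_def
    proof (rule equals0I)
      fix g assume "g \<in> A n \<inter> mball x r"
      then have gA: "g \<in> A n" and gP: "g \<in> P" and dxg: "dP P \<omega> h x g < r" by auto
      have gb: "cmod (torus_integral (\<lambda>y. g y * v y)) \<le> real n * Nv v" using gA v unfolding A_def by auto
      have wxg: "wn \<omega> (1/h) (\<lambda>y. x y - g y) < r" using dxg xP gP unfolding dP_def by simp
      have xgE: "(\<lambda>y. x y - g y) \<in> Eh \<omega> h" by (rule wn_diff(1)[OF PE[OF xP] PE[OF gP]])
      have cx: "continuous_on UNIV (\<lambda>y. x y * v y)" by (intro sp_cont sp_mult spP xP spv)
      have cg: "continuous_on UNIV (\<lambda>y. g y * v y)" by (intro sp_cont sp_mult spP gP spv)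
      have "torus_integral (\<lambda>y. x y * v y) - torus_integral (\<lambda>y. g y * v y) = torus_integral (\<lambda>y. (x y - g y) * v y)"
        unfolding torus_integral_def
        using integral_diff[OF cont_int[OF cx] cont_int[OF cg]] by (simp add: left_diff_distrib)
      also have "cmod \<dots> \<le> (wn \<omega> (1/h) (\<lambda>y. x y - g y) / \<rho>h * Bv) * vol"
        unfolding vol_def
      proof (rule int_bound)
        show "continuous_on UNIV (\<lambda>y. (x y - g y) * v y)"
          by (intro sp_cont sp_mult sp_diff spP xP gP spv)
        fix y show "cmod ((x y - g y) * v y) \<le> wn \<omega> (1/h) (\<lambda>y. x y - g y) / \<rho>h * Bv"
          unfolding norm_mult using Eh_bdd[OF xgE, of y] Bv \<rho>h wn_nonneg[of \<omega> "1/h" "\<lambda>y. x y - g y"]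
          unfolding \<rho>h_def by (intro mult_mono) auto
      qed
      also have "\<dots> = wn \<omega> (1/h) (\<lambda>y. x y - g y) * c" unfolding c_def by simp
      also have "\<dots> \<le> r * c" using wxg c by (intro mult_right_mono) auto
      finally have "cmod (torus_integral (\<lambda>y. x y * v y) - torus_integral (\<lambda>y. g y * v y)) < \<delta>" using rc by simp
      then have "cmod (torus_integral (\<lambda>y. x y * v y)) < cmod (torus_integral (\<lambda>y. g y * v y)) + \<delta>"
        using norm_triangle_ineq2[of "torus_integral (\<lambda>y. x y * v y)" "torus_integral (\<lambda>y. g y * v y)"] by linarith
      then show False using gb unfolding \<delta>_def by linarith
    qed
    then show "\<exists>r>0. disjnt (A n) (mball x r)" using r by blast
  qed
  have "\<exists>n. mtopology interior_of (A n) \<noteq> {}"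
  proof (rule ccontr)
    assume "\<not> (\<exists>n. mtopology interior_of (A n) \<noteq> {})"
    then have "mtopology interior_of \<Union>(range A) = {}"
      by (intro metric_Baire_category_alt[OF mc]) (auto simp: closed)
    then have "P = {}" unfolding cover using interior_of_topspace[of mtopology] by simp
    then show False using Pp(3) by auto
  qed
  then obtain n f0 where f0: "f0 \<in> mtopology interior_of (A n)" by blast
  then obtain r where r: "r > 0" "mball f0 r \<subseteq> mtopology interior_of (A n)"
    using openin_interior_of[of mtopology "A n"] unfolding openin_mtopology by blast
  have f0P: "f0 \<in> P" using f0 interior_of_subset[of mtopology "A n"] AP by blast
  have ballA: "mball f0 r \<subseteq> A n" using r(2) interior_of_subset[of mtopology "A n"] by blast
  define C where "C = 4 * real n / r + 1"
  have C: "C > 0" unfolding C_def using r by (simp add: add_nonneg_pos)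
  show "\<exists>C>0. \<forall>f v. f \<in> polar_ker_tL \<omega> m a \<and> f \<in> Eh \<omega> h \<and> v \<in> Eom \<omega> \<and> tLop m a v \<in> Eh \<omega> k \<longrightarrow>
           ereal (cmod (torus_integral (\<lambda>x. f x * v x)))
             \<le> ereal C * wnorm \<omega> (1/h) f * wnorm \<omega> (1/k) (tLop m a v)"
  proof (intro exI[of _ C] conjI C allI impI)
    fix f v assume fv: "f \<in> polar_ker_tL \<omega> m a \<and> f \<in> Eh \<omega> h \<and> v \<in> Eom \<omega> \<and> tLop m a v \<in> Eh \<omega> k"
    then have fP: "f \<in> P" and vV: "v \<in> V" unfolding P_def V_def by auto
    define W where "W = wn \<omega> (1/h) f"
    have W0: "W \<ge> 0" unfolding W_def by (rule wn_nonneg)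
    have wf: "wnorm \<omega> (1/h) f = ereal W" unfolding W_def using fv fin_wnorm unfolding Eh_iff by blast
    have wv: "wnorm \<omega> (1/k) (tLop m a v) = ereal (Nv v)" unfolding Nv_def using fv fin_wnorm unfolding Eh_iff by blast
    have spv: "sp v" using fv Eom_bdd(1) by auto
    have key: "cmod (torus_integral (\<lambda>x. f x * v x)) \<le> C * W * Nv v"
    proof (cases "W = 0")
      case True
      then have "f x = 0" for x using wn_eq0[of f \<omega> h] fv unfolding W_def by blast
      then have "torus_integral (\<lambda>x. f x * v x) = 0" unfolding torus_integral_def by simp
      then show ?thesis using C W0 Nv0[of v] by simp
    next
      case False
      then have Wp: "W > 0" using W0 by simp
      define c where "c = r / (2 * W)"
      have cp: "c > 0" unfolding c_def using r Wp by simp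
      define g where "g = (\<lambda>x. f0 x + complex_of_real c * f x)"
      have gP: "g \<in> P" unfolding g_def by (intro Pp(1) Pp(2) f0P fP)
      have "wn \<omega> (1/h) (\<lambda>x. f0 x - g x) = wn \<omega> (1/h) (\<lambda>x. complex_of_real (- c) * f x)"
        unfolding g_def by simp
      also have "\<dots> \<le> cmod (complex_of_real (- c)) * W" unfolding W_def by (rule wn_cmul(2)[OF PE[OF fP]])
      also have "\<dots> = c * W" using cp by simp
      also have "\<dots> = r / 2" using Wp unfolding c_def by simp
      also have "\<dots> < r" using r by simp
      finally have "dP P \<omega> h f0 g < r" using f0P gP unfolding dP_def by simp
      then have "g \<in> A n" using ballA f0P gP by auto
      then have gb: "cmod (torus_integral (\<lambda>x. g x * v x)) \<le> real n * Nv v" using vV unfolding A_def by auto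
      have "f0 \<in> A n" using ballA f0P r by auto
      then have f0b: "cmod (torus_integral (\<lambda>x. f0 x * v x)) \<le> real n * Nv v" using vV unfolding A_def by auto
      have c1: "continuous_on UNIV (\<lambda>x. f0 x * v x)" by (intro sp_cont sp_mult spP f0P spv)
      have c2: "continuous_on UNIV (\<lambda>x. f x * v x)" by (intro sp_cont sp_mult spP fP spv)
      have "torus_integral (\<lambda>x. g x * v x) = torus_integral (\<lambda>x. f0 x * v x + complex_of_real c * (f x * v x))"
        unfolding g_def by (simp add: distrib_right mult.assoc)
      also have "\<dots> = torus_integral (\<lambda>x. f0 x * v x) + complex_of_real c * torus_integral (\<lambda>x. f x * v x)"
        unfolding torus_integral_def
        by (subst integral_add[OF cont_int[OF c1] integrable_on_mult_right[OF cont_int[OF c2]]]) simp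
      finally have "complex_of_real c * torus_integral (\<lambda>x. f x * v x) = torus_integral (\<lambda>x. g x * v x) - torus_integral (\<lambda>x. f0 x * v x)"
        by simp
      then have "c * cmod (torus_integral (\<lambda>x. f x * v x)) \<le> cmod (torus_integral (\<lambda>x. g x * v x)) + cmod (torus_integral (\<lambda>x. f0 x * v x))"
        using cp norm_triangle_ineq4[of "torus_integral (\<lambda>x. g x * v x)" "torus_integral (\<lambda>x. f0 x * v x)"]
        by (metis abs_of_pos norm_mult norm_of_real)
      also have "\<dots> \<le> 2 * real n * Nv v" using gb f0b by simp
      finally have "c * cmod (torus_integral (\<lambda>x. f x * v x)) \<le> 2 * real n * Nv v" .
      then have "cmod (torus_integral (\<lambda>x. f x * v x)) \<le> 2 * real n * Nv v / c"
        using cp by (simp add: pos_le_divide_eq mult.commute)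
      also have "\<dots> = (4 * real n / r) * W * Nv v" unfolding c_def using r Wp by (simp add: field_simps)
      also have "\<dots> \<le> C * W * Nv v" unfolding C_def using W0 Nv0[of v]
        by (intro mult_right_mono) auto
      finally show ?thesis .
    qed
    show "ereal (cmod (torus_integral (\<lambda>x. f x * v x))) \<le> ereal C * wnorm \<omega> (1/h) f * wnorm \<omega> (1/k) (tLop m a v)"
      unfolding wf wv using key by simp
  qed
qed

end
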